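(* Let $\mathbb{K}$ be an algebraically closed field of characteristic $p$, with $p=0$ or $p\ge5$, and let $(\Lambda_1,\Lambda_2,\Lambda_3)$ be a dual $3$-net of conic-line type of order $n$ in $PG(2,\mathbb{K})$, with $n<p$ if $p>0$. Then $(\Lambda_1,\Lambda_2,\Lambda_3)$ realizes a cyclic group $C_n$.
   Context: A dual $3$-net of order $n$ in $PG(2,\mathbb{K})$ is a triple $(\Lambda_1,\Lambda_2,\Lambda_3)$ of pairwise disjoint point sets, each of size $n$, such that every line meeting two distinct components meets each component in exactly one point. It realizes a group $(G,\cdot)$ if there are bijections $\alpha:G\to\Lambda_1$, $\beta:G\to\Lambda_2$, $\gamma:G\to\Lambda_3$ with $a\cdot b=c$ iff $\alpha(a),\beta(b),\gamma(c)$ are collinear. A dual $3$-net of order $n\ge4$ is of conic-line type if two of its components lie on an irreducible conic and the third lies on a line. *)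

theory Defs
  imports "HOL-Computational_Algebra.Polynomial"
begin

type_synonym 'k vec3 = "'k \<times> 'k \<times> 'k"

definition smul3 :: "'k::field \<Rightarrow> 'k vec3 \<Rightarrow> 'k vec3" where
  "smul3 c v = (case v of (x, y, z) \<Rightarrow> (c * x, c * y, c * z))"

definition dot3 :: "'k::field vec3 \<Rightarrow> 'k vec3 \<Rightarrow> 'k" where
  "dot3 a v = (case a of (a1, a2, a3) \<Rightarrow> case v of (x, y, z) \<Rightarrow> a1 * x + a2 * y + a3 * z)"

definition proj_point :: "'k::field vec3 \<Rightarrow> 'k vec3 set" where
  "proj_point v = {smul3 c v | c. c \<noteq> 0}"

definition PG2 :: "'k::field vec3 set set" where
  "PG2 = {proj_point v | v. v \<noteq> (0, 0, 0)}"

definition pline :: "'k::field vec3 \<Rightarrow> 'k vec3 set set" where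
  "pline a = {proj_point v | v. v \<noteq> (0, 0, 0) \<and> dot3 a v = 0}"

definition plines :: "'k::field vec3 set set set" where
  "plines = {pline a | a. a \<noteq> (0, 0, 0)}"

definition pcollinear :: "'k::field vec3 set \<Rightarrow> 'k vec3 set \<Rightarrow> 'k vec3 set \<Rightarrow> bool" where
  "pcollinear P Q R \<longleftrightarrow> (\<exists>l\<in>plines. P \<in> l \<and> Q \<in> l \<and> R \<in> l)"

type_synonym 'k qform = "'k \<times> 'k \<times> 'k \<times> 'k \<times> 'k \<times> 'k"

definition qeval :: "'k::field qform \<Rightarrow> 'k vec3 \<Rightarrow> 'k" where
  "qeval q v = (case q of (a, b, c, d, e, f) \<Rightarrow> case v of (x, y, z) \<Rightarrow>
      a * x^2 + b * y^2 + c * z^2 + d * x * y + e * x * z + f * y * z)"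

definition lin_prod :: "'k::field vec3 \<Rightarrow> 'k vec3 \<Rightarrow> 'k qform" where
  "lin_prod l m = (case l of (l1, l2, l3) \<Rightarrow> case m of (m1, m2, m3) \<Rightarrow>
      (l1 * m1, l2 * m2, l3 * m3, l1 * m2 + l2 * m1, l1 * m3 + l3 * m1, l2 * m3 + l3 * m2))"

definition irreducible_qform :: "'k::field qform \<Rightarrow> bool" where
  "irreducible_qform q \<longleftrightarrow> q \<noteq> (0, 0, 0, 0, 0, 0) \<and> (\<nexists>l m. q = lin_prod l m)"

definition conic_pts :: "'k::field qform \<Rightarrow> 'k vec3 set set" where
  "conic_pts q = {proj_point v | v. v \<noteq> (0, 0, 0) \<and> qeval q v = 0}"

definition irreducible_conic :: "'k::field vec3 set set \<Rightarrow> bool" where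
  "irreducible_conic C \<longleftrightarrow> (\<exists>q. irreducible_qform q \<and> C = conic_pts q)"

definition comp3 :: "'a \<Rightarrow> 'a \<Rightarrow> 'a \<Rightarrow> nat \<Rightarrow> 'a" where
  "comp3 A B C i = (if i = 0 then A else if i = 1 then B else C)"

definition dual_3net ::
  "'k::field vec3 set set \<Rightarrow> 'k vec3 set set \<Rightarrow> 'k vec3 set set \<Rightarrow> nat \<Rightarrow> bool" where
  "dual_3net L1 L2 L3 n \<longleftrightarrow>
     (\<forall>i<3. comp3 L1 L2 L3 i \<subseteq> PG2 \<and> finite (comp3 L1 L2 L3 i) \<and> card (comp3 L1 L2 L3 i) = n) \<and>
     (\<forall>i<3. \<forall>j<3. i \<noteq> j \<longrightarrow> comp3 L1 L2 L3 i \<inter> comp3 L1 L2 L3 j = {}) \<and>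
     (\<forall>l\<in>plines. \<forall>i<3. \<forall>j<3. i \<noteq> j \<and> l \<inter> comp3 L1 L2 L3 i \<noteq> {} \<and> l \<inter> comp3 L1 L2 L3 j \<noteq> {}
        \<longrightarrow> (\<forall>k<3. card (l \<inter> comp3 L1 L2 L3 k) = 1))"

definition conic_line_type ::
  "'k::field vec3 set set \<Rightarrow> 'k vec3 set set \<Rightarrow> 'k vec3 set set \<Rightarrow> nat \<Rightarrow> bool" where
  "conic_line_type L1 L2 L3 n \<longleftrightarrow> dual_3net L1 L2 L3 n \<and> n \<ge> 4 \<and>
     (\<exists>k<3. \<exists>C l. irreducible_conic C \<and> l \<in> plines \<and> comp3 L1 L2 L3 k \<subseteq> l \<and>
        (\<forall>i<3. i \<noteq> k \<longrightarrow> comp3 L1 L2 L3 i \<subseteq> C))"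

definition realizes ::
  "'k::field vec3 set set \<Rightarrow> 'k vec3 set set \<Rightarrow> 'k vec3 set set \<Rightarrow> 'g set \<Rightarrow> ('g \<Rightarrow> 'g \<Rightarrow> 'g) \<Rightarrow> bool" where
  "realizes L1 L2 L3 G gop \<longleftrightarrow> (\<exists>\<alpha> \<beta> \<gamma>. bij_betw \<alpha> G L1 \<and> bij_betw \<beta> G L2 \<and> bij_betw \<gamma> G L3 \<and>
     (\<forall>a\<in>G. \<forall>b\<in>G. \<forall>c\<in>G. gop a b = c \<longleftrightarrow> pcollinear (\<alpha> a) (\<beta> b) (\<gamma> c)))"

definition cyclic_carrier :: "nat \<Rightarrow> nat set" where "cyclic_carrier n = {0..<n}"
definition cyclic_mult :: "nat \<Rightarrow> nat \<Rightarrow> nat \<Rightarrow> nat" where "cyclic_mult n a b = (a + b) mod n"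

end

theory Submission
  imports Defs "HOL-Algebra.Multiplicative_Group" "HOL-Computational_Algebra.Polynomial"
begin

context group begin

lemma num_elems_of_ord_eq_phi'':
  assumes finite: "finite (carrier G)"
      and bound: "\<And>d. d > 0 \<Longrightarrow> card {x \<in> carrier G. x [^] d = \<one>} \<le> d"
      and dvd: "d dvd Coset.order G"
      and exists: "\<exists>a\<in>carrier G. ord a = d"
  shows "card {a \<in> carrier G. ord a = d} = phi' d"
proof -
  from exists
  obtain a where a: "a \<in> carrier G" and ord_a: "ord a = d"
    by (auto simp add: card_gt_0_iff)
  have "0 < Coset.order G" unfolding Coset.order_def using finite by (simp add: card_gt_0_iff) blast
  then have dpos: "d > 0" using dvd by (simp add: dvd_pos_nat)
  have set_eq1: "{a[^]n| n. n \<in> {1 .. d}} = {x \<in> carrier G. x [^] d = \<one>}"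
  proof (rule card_seteq)
    show "finite {x \<in> carrier G. x [^] d = \<one>}" using finite by auto
    show "{a[^]n| n. n \<in> {1 ..d}} \<subseteq> {x \<in> carrier G. x[^]d = \<one>}"
    proof
      fix x assume "x \<in> {a[^]n | n. n \<in> {1 .. d}}"
      then obtain n where n: "x = a[^]n \<and> n \<in> {1 .. d}" by auto
      have "x[^]d =(a[^]d)[^]n" using n a ord_a by (simp add:nat_pow_pow mult.commute)
      hence "x[^]d = \<one>" using ord_a pow_ord_eq_1[OF a] by fastforce
      thus "x \<in> {x \<in> carrier G. x[^]d = \<one>}" using nat_pow_closed[OF a] n by blast
    qed
    show "card {x \<in> carrier G. x [^] d = \<one>} \<le> card {a[^]n | n. n \<in> {1 .. d}}"
    proof -
      have *: "{a[^]n | n. n \<in> {1 .. d }} = ((\<lambda> n. a[^]n) ` {1 .. d})" by auto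
      have "card {x \<in> carrier G. x [^] d = \<one>} \<le> d" using bound dpos by blast
      thus ?thesis using ord_inj'[OF a] ord_a * by (simp add: card_image)
    qed
  qed
  have set_eq2: "{x \<in> carrier G . ord x = d}
                = (\<lambda> n . a[^]n) ` {n \<in> {1 .. d}. ord (a[^]n) = d}" (is "?L = ?R")
  proof
    have "x \<in> ?R" if x: "x \<in> (carrier G) \<and> ord x = d" for x
    proof -
      from that have "x \<in> {x \<in> carrier G. x [^] d = \<one>}"
        by (simp add: pow_ord_eq_1[of x, symmetric])
      then obtain n where n: "x = a[^]n \<and> n \<in> {1 .. d}" using set_eq1 by blast
      then show ?thesis using x by fast
    qed
    thus "?L \<subseteq> ?R" by blast
    show "?R \<subseteq> ?L" using a by auto
  qed
  have "inj_on (\<lambda> n . a[^]n) {n \<in> {1 .. d}. ord (a[^]n) = d}"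
    using ord_inj'[OF a, unfolded ord_a] unfolding inj_on_def by fast
  hence "card ((\<lambda>n. a[^]n) ` {n \<in> {1 .. d}. ord (a[^]n) = d})
         = card {k \<in> {1 .. d}. ord (a[^]k) = d}"
         using card_image by blast
  thus ?thesis using set_eq2 pow_ord_eq_ord_iff[OF finite \<open>a \<in> _\<close>, unfolded ord_a]
    by (simp add: phi'_def)
qed

theorem gen_of_roots_bound:
  assumes finite: "finite (carrier G)"
      and bound: "\<And>d. d > 0 \<Longrightarrow> card {x \<in> carrier G. x [^] d = \<one>} \<le> d"
  shows "\<exists>a\<in>carrier G. ord a = Coset.order G"
proof -
  let ?N = "\<lambda> x . card {a \<in> carrier G. ord a  = x}"
  have *: "0 < Coset.order G" unfolding Coset.order_def using finite by (simp add: card_gt_0_iff) blast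
  have fin: "finite {d. d dvd Coset.order G }" using dvd_nat_bounds[OF *] by force
  have "(\<Sum>d | d dvd Coset.order G. ?N d)
      = card (UN d:{d . d dvd Coset.order G }. {a \<in> carrier G. ord a  = d})"
      (is "_ = card ?U")
    using fin finite by (subst card_UN_disjoint) auto
  also have "?U = carrier G"
  proof
    have "x \<in> ?U" if x: "x \<in> carrier G" for x
    proof -
      have "ord x dvd Coset.order G"
        using ord_dvd_group_order x by blast
      then show ?thesis
        using dvd_nat_bounds[of "Coset.order G" "ord x"] x by blast
    qed
    thus "carrier G \<subseteq> ?U" by blast
  qed auto
  also have "card ... = Coset.order G"
    by (simp add: Coset.order_def)
  finally have sum_Ns_eq: "(\<Sum>d | d dvd Coset.order G. ?N d) = Coset.order G" .
  have "card {a \<in> carrier G. ord a = d} \<le> phi' d"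
    if d: "d dvd Coset.order G" for d
  proof (cases "card {a \<in> carrier G. ord a = d} = 0")
    case True
    thus ?thesis by presburger
  next
    case False
    hence "\<exists>a \<in> carrier G. ord a = d" by (auto simp: card_eq_0_iff)
    thus ?thesis using num_elems_of_ord_eq_phi''[OF finite bound d] by auto
  qed
  hence all_le: "\<And>i. i \<in> {d. d dvd Coset.order G }
        \<Longrightarrow> (\<lambda>i. card {a \<in> carrier G. ord a = i}) i \<le> (\<lambda>i. phi' i) i" by fast
  hence le: "(\<Sum>i | i dvd Coset.order G. ?N i)
            \<le> (\<Sum>i | i dvd Coset.order G. phi' i)"
            using sum_mono[of "{d .  d dvd Coset.order G}"
                  "\<lambda>i. card {a \<in> carrier G. ord a = i}"] by presburger
  have "Coset.order G = (\<Sum>d | d dvd Coset.order G. phi' d)" using *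
    by (simp add: sum_phi'_factors)
  hence eq: "(\<Sum>i | i dvd Coset.order G. ?N i)
          = (\<Sum>i | i dvd Coset.order G. phi' i)" using le sum_Ns_eq by presburger
  have "\<And>i. i \<in> {d. d dvd Coset.order G } \<Longrightarrow> ?N i = (\<lambda>i. phi' i) i"
  proof (rule ccontr)
    fix i
    assume i1: "i \<in> {d. d dvd Coset.order G}" and "?N i \<noteq> phi' i"
    hence "?N i = 0"
      using num_elems_of_ord_eq_phi''[OF finite bound, of i] by (auto simp: card_eq_0_iff)
    moreover  have "0 < i" using * i1 by (simp add: dvd_nat_bounds[of "Coset.order G" i])
    ultimately have "?N i < phi' i" using phi'_nonzero by presburger
    hence "(\<Sum>i | i dvd Coset.order G. ?N i)
         < (\<Sum>i | i dvd Coset.order G. phi' i)"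
      using sum_strict_mono_ex1[OF fin, of "?N" "\<lambda> i . phi' i"]
            i1 all_le by auto
    thus False using eq by force
  qed
  hence "?N (Coset.order G) > 0" using * by (simp add: phi'_nonzero)
  then show ?thesis by (auto simp add: card_gt_0_iff)
qed

end

lemma roots_unity_bound:
  fixes S :: "'k::field set"
  assumes "d > 0"
  shows "card {x \<in> S. x ^ d = 1} \<le> d"
proof -
  define p :: "'k poly" where "p = Polynomial.monom 1 d + [:-1:]"
  have deg: "degree p = d" unfolding p_def using assms
    by (subst degree_add_eq_left) (simp_all add: degree_monom_eq)
  then have p0: "p \<noteq> 0" using assms by auto
  have "{x \<in> S. x ^ d = 1} \<subseteq> {x. poly p x = 0}" by (auto simp: p_def poly_monom)
  moreover have "finite {x. poly p x = 0}" using p0 by (rule poly_roots_finite)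
  ultimately have "card {x \<in> S. x ^ d = 1} \<le> card {x. poly p x = 0}" by (rule card_mono[rotated])
  also have "\<dots> \<le> d" using card_poly_roots_bound[OF p0] deg by simp
  finally show ?thesis .
qed

lemma finite_mult_subgroup_cyclic:
  fixes S :: "'k::field set"
  assumes fin: "finite S" and one: "1 \<in> S" and nz: "0 \<notin> S" and cl: "\<And>x y. x\<in>S \<Longrightarrow> y\<in>S \<Longrightarrow> x*y \<in> S"
  shows "\<exists>g. S = (\<lambda>i. g^i) ` {0..<card S} \<and> inj_on (\<lambda>i. g^i) {0..<card S} \<and> g ^ card S = 1"
proof -
  define G where "G = \<lparr>carrier = S, monoid.mult = (*), one = (1::'k)\<rparr>"
  have inv: "\<exists>y\<in>S. y * x = 1" if x: "x \<in> S" for x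
  proof -
    have "x \<noteq> 0" using x nz by auto
    then have "inj_on (\<lambda>y. x * y) S" by (auto simp: inj_on_def)
    moreover have "(\<lambda>y. x * y) ` S \<subseteq> S" using cl x by auto
    ultimately have "(\<lambda>y. x * y) ` S = S" using fin by (simp add: endo_inj_surj)
    then have "1 \<in> (\<lambda>y. x * y) ` S" using one by simp
    then show ?thesis by (auto simp: mult.commute)
  qed
  have grp: "group G"
    by (rule groupI) (auto simp: G_def cl one inv mult.assoc)
  interpret group G by (rule grp)
  have pw: "x [^]\<^bsub>G\<^esub> (k::nat) = x ^ k" for x k
    by (induction k) (simp_all add: G_def mult.commute)
  have bound: "card {x \<in> carrier G. x [^]\<^bsub>G\<^esub> d = \<one>\<^bsub>G\<^esub>} \<le> d" if "d > 0" for d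
  proof -
    have "{x \<in> carrier G. x [^]\<^bsub>G\<^esub> d = \<one>\<^bsub>G\<^esub>} = {x \<in> S. x ^ d = 1}"
      by (simp add: pw) (simp add: G_def)
    then show ?thesis using roots_unity_bound[OF that, of S] by simp
  qed
  obtain g where g: "g \<in> S" "ord g = card S"
    using gen_of_roots_bound[OF _ bound] fin by (auto simp: G_def Coset.order_def)
  have gS: "g \<in> carrier G" using g by (simp add: G_def)
  have injg: "inj_on (\<lambda>i. g ^ i) {0..<card S}"
  proof -
    have "inj_on (\<lambda>i. g [^]\<^bsub>G\<^esub> i) {0 .. ord g - 1}" by (rule ord_inj[OF gS])
    moreover have "card S > 0" using fin one by (auto simp: card_gt_0_iff)
    then have "{0 .. ord g - 1} = {0..<card S}" using g by auto
    ultimately show ?thesis by (simp add: pw)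
  qed
  have sub: "(\<lambda>i. g^i) ` {0..<card S} \<subseteq> S"
  proof -
    have "g ^ i \<in> carrier G" for i using nat_pow_closed[OF gS, of i] by (simp add: pw)
    then show ?thesis by (auto simp: G_def)
  qed
  have "(\<lambda>i. g^i) ` {0..<card S} = S"
    using card_image[OF injg] sub fin by (intro card_subset_eq) auto
  moreover have "g ^ card S = 1" using pow_ord_eq_1[OF gS] g by (simp add: pw) (simp add: G_def)
  ultimately show ?thesis using injg by blast
qed

definition add3 :: "'k::field vec3 \<Rightarrow> 'k vec3 \<Rightarrow> 'k vec3" where
  "add3 u v = (case u of (a,b,c) \<Rightarrow> case v of (x,y,z) \<Rightarrow> (a+x,b+y,c+z))"

definition cross :: "'k::field vec3 \<Rightarrow> 'k vec3 \<Rightarrow> 'k vec3" where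
  "cross u v = (case u of (a1,a2,a3) \<Rightarrow> case v of (b1,b2,b3) \<Rightarrow>
     (a2*b3-a3*b2, a3*b1-a1*b3, a1*b2-a2*b1))"

definition det3 :: "'k::field vec3 \<Rightarrow> 'k vec3 \<Rightarrow> 'k vec3 \<Rightarrow> 'k" where
  "det3 u v w = dot3 u (cross v w)"

definition grad :: "'k::field qform \<Rightarrow> 'k vec3 \<Rightarrow> 'k vec3" where
  "grad q u = (case q of (a,b,c,d,e,f) \<Rightarrow> case u of (x,y,z) \<Rightarrow>
     (2*a*x + d*y + e*z, 2*b*y + d*x + f*z, 2*c*z + e*x + f*y))"

definition pol :: "'k::field qform \<Rightarrow> 'k vec3 \<Rightarrow> 'k vec3 \<Rightarrow> 'k" where
  "pol q u v = dot3 (grad q u) v"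

lemmas vdefs = add3_def cross_def det3_def grad_def pol_def dot3_def smul3_def qeval_def lin_prod_def

lemma dot_add: "dot3 a (add3 u v) = dot3 a u + dot3 a v"
  by (cases a; cases u; cases v) (simp add: vdefs algebra_simps)
lemma dot_smul: "dot3 a (smul3 c u) = c * dot3 a u"
  by (cases a; cases u) (simp add: vdefs algebra_simps)
lemma dot_comm: "dot3 a u = dot3 u a"
  by (cases a; cases u) (simp add: vdefs algebra_simps)
lemma dot_smul_left: "dot3 (smul3 c a) u = c * dot3 a u"
  by (cases a; cases u) (simp add: vdefs algebra_simps)
lemma q_smul: "qeval q (smul3 c u) = c^2 * qeval q u"
  by (cases q; cases u) (simp add: vdefs power2_eq_square algebra_simps)
lemma q_add: "qeval q (add3 u v) = qeval q u + qeval q v + pol q u v"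
  by (cases q; cases u; cases v) (simp add: vdefs power2_eq_square algebra_simps)
lemma pol_sym: "pol q u v = pol q v u"
  by (cases q; cases u; cases v) (simp add: vdefs algebra_simps)
lemma pol_self: "pol q u u = 2 * qeval q u"
  by (cases q; cases u) (simp add: vdefs power2_eq_square algebra_simps)
lemma pol_add: "pol q u (add3 v w) = pol q u v + pol q u w"
  by (simp add: pol_def dot_add)
lemma pol_smul: "pol q u (smul3 c v) = c * pol q u v"
  by (simp add: pol_def dot_smul)
lemma pol_add_l: "pol q (add3 v w) u = pol q v u + pol q w u"
  by (simp add: pol_sym[of q _ u] pol_add)
lemma pol_smul_l: "pol q (smul3 c v) u = c * pol q v u"
  by (simp add: pol_sym[of q _ u] pol_smul)
lemma smul_smul: "smul3 a (smul3 b u) = smul3 (a*b) u"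
  by (cases u) (simp add: vdefs)
lemma smul_one[simp]: "smul3 1 u = u"
  by (cases u) (simp add: vdefs)
lemma smul_zero_iff: "smul3 c u = (0,0,0) \<longleftrightarrow> c = 0 \<or> u = (0,0,0)"
  by (cases u) (auto simp: vdefs)

lemma cross_dot1: "dot3 u (cross u v) = 0"
  by (cases u; cases v) (simp add: vdefs algebra_simps)
lemma cross_dot2: "dot3 v (cross u v) = 0"
  by (cases u; cases v) (simp add: vdefs algebra_simps)
lemma det_cyc: "det3 u v w = dot3 w (cross u v)"
  by (cases u; cases v; cases w) (simp add: vdefs algebra_simps)
lemma det_cyc2: "det3 u v w = det3 v w u"
  by (cases u; cases v; cases w) (simp add: vdefs algebra_simps)
lemma bac_cab: "cross a (cross u v) = add3 (smul3 (dot3 a v) u) (smul3 (- dot3 a u) v)"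
  by (cases a; cases u; cases v) (simp add: vdefs algebra_simps)
lemma cross_smul: "cross (smul3 c u) v = smul3 c (cross u v)"
  by (cases u; cases v) (simp add: vdefs algebra_simps)
lemma cross_smul2: "cross u (smul3 c v) = smul3 c (cross u v)"
  by (cases u; cases v) (simp add: vdefs algebra_simps)
lemma cross_anti: "cross u v = smul3 (-1) (cross v u)"
  by (cases u; cases v) (simp add: vdefs algebra_simps)
lemma cross_self: "cross u u = (0,0,0)"
  by (cases u) (simp add: vdefs algebra_simps)

lemma cramer:
  "smul3 (det3 e f g) x = add3 (smul3 (dot3 (cross f g) x) e)
      (add3 (smul3 (dot3 (cross g e) x) f) (smul3 (dot3 (cross e f) x) g))"
  by (cases e; cases f; cases g; cases x) (simp add: vdefs algebra_simps)

lemma cross_zero_prop: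
  assumes "cross u v = (0,0,0)" "u \<noteq> (0,0,0)"
  shows "\<exists>c. v = smul3 c u"
proof -
  obtain u1 u2 u3 where u: "u = (u1,u2,u3)" by (cases u)
  obtain v1 v2 v3 where v: "v = (v1,v2,v3)" by (cases v)
  have e: "u2*v3 = u3*v2" "u3*v1 = u1*v3" "u1*v2 = u2*v1" using assms(1) by (auto simp: u v cross_def)
  show ?thesis
  proof (cases "u1 \<noteq> 0")
    case True
    show ?thesis by (rule exI[of _ "v1/u1"]) (use True e in \<open>auto simp: u v smul3_def field_simps\<close>)
  next
    case F1: False
    show ?thesis
    proof (cases "u2 \<noteq> 0")
      case True
      show ?thesis by (rule exI[of _ "v2/u2"]) (use True F1 e in \<open>auto simp: u v smul3_def field_simps\<close>)
    next
      case False
      then have "u3 \<noteq> 0" using F1 assms(2) u by auto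
      then show ?thesis by (intro exI[of _ "v3/u3"]) (use False F1 e in \<open>auto simp: u v smul3_def field_simps\<close>)
    qed
  qed
qed

lemma prop_cross: "cross u (smul3 c u) = (0,0,0)"
  by (cases u) (simp add: cross_def smul3_def algebra_simps)

lemma proj_point_self: "u \<in> proj_point u"
  unfolding proj_point_def by (rule CollectI, rule exI[of _ 1]) simp

lemma proj_point_eq_iff:
  assumes "u \<noteq> (0,0,0)"
  shows "proj_point u = proj_point v \<longleftrightarrow> (\<exists>c. c \<noteq> 0 \<and> v = smul3 c u)"
proof
  assume "proj_point u = proj_point v"
  then have "v \<in> proj_point u" using proj_point_self by metis
  then show "\<exists>c. c \<noteq> 0 \<and> v = smul3 c u" by (auto simp: proj_point_def)
next
  assume "\<exists>c. c \<noteq> 0 \<and> v = smul3 c u"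
  then obtain c where c: "c \<noteq> 0" "v = smul3 c u" by auto
  show "proj_point u = proj_point v"
  proof (intro Set.set_eqI iffI)
    fix x assume "x \<in> proj_point u"
    then obtain d where "d \<noteq> 0" "x = smul3 d u" by (auto simp: proj_point_def)
    then have "x = smul3 (d/c) v" "d/c \<noteq> 0" using c by (auto simp: smul_smul)
    then show "x \<in> proj_point v" by (auto simp: proj_point_def)
  next
    fix x assume "x \<in> proj_point v"
    then obtain d where "d \<noteq> 0" "x = smul3 d v" by (auto simp: proj_point_def)
    then have "x = smul3 (d*c) u" "d*c \<noteq> 0" using c by (auto simp: smul_smul)
    then show "x \<in> proj_point u" by (auto simp: proj_point_def)
  qed
qed

lemma proj_point_eq_cross:
  assumes "u \<noteq> (0,0,0)" "v \<noteq> (0,0,0)"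
  shows "proj_point u = proj_point v \<longleftrightarrow> cross u v = (0,0,0)"
proof
  assume "proj_point u = proj_point v"
  then obtain c where "v = smul3 c u" using proj_point_eq_iff assms by blast
  then show "cross u v = (0,0,0)" by (simp add: prop_cross)
next
  assume "cross u v = (0,0,0)"
  then obtain c where c: "v = smul3 c u" using cross_zero_prop assms by blast
  then have "c \<noteq> 0" using assms by (auto simp: smul_zero_iff)
  then show "proj_point u = proj_point v" using c proj_point_eq_iff assms by blast
qed

lemma in_pline_iff:
  assumes "u \<noteq> (0,0,0)"
  shows "proj_point u \<in> pline a \<longleftrightarrow> dot3 a u = 0"
proof
  assume "proj_point u \<in> pline a"
  then obtain v where v: "proj_point u = proj_point v" "v \<noteq> (0,0,0)" "dot3 a v = 0"
    by (auto simp: pline_def)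
  then obtain c where "c \<noteq> 0" "v = smul3 c u" using proj_point_eq_iff assms by blast
  then show "dot3 a u = 0" using v by (simp add: dot_smul)
next
  assume "dot3 a u = 0"
  then show "proj_point u \<in> pline a" unfolding pline_def using assms by blast
qed

lemma in_conic_iff:
  assumes "u \<noteq> (0,0,0)"
  shows "proj_point u \<in> conic_pts q \<longleftrightarrow> qeval q u = 0"
proof
  assume "proj_point u \<in> conic_pts q"
  then obtain v where v: "proj_point u = proj_point v" "v \<noteq> (0,0,0)" "qeval q v = 0"
    by (auto simp: conic_pts_def)
  then obtain c where "c \<noteq> 0" "v = smul3 c u" using proj_point_eq_iff assms by blast
  then show "qeval q u = 0" using v by (simp add: q_smul)
next
  assume "qeval q u = 0"
  then show "proj_point u \<in> conic_pts q" unfolding conic_pts_def using assms by blast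
qed

lemma cross_parallel:
  assumes "dot3 a u = 0" "dot3 a v = 0" "a \<noteq> (0,0,0)"
  shows "\<exists>c. cross u v = smul3 c a"
proof -
  have "cross a (cross u v) = (0,0,0)" using assms by (simp add: bac_cab smul3_def add3_def)
  then show ?thesis using cross_zero_prop assms(3) by blast
qed

lemma pcollinear_iff:
  assumes "u \<noteq> (0,0,0)" "v \<noteq> (0,0,0)" "w \<noteq> (0,0,0)" "cross u v \<noteq> (0,0,0)"
  shows "pcollinear (proj_point u) (proj_point v) (proj_point w) \<longleftrightarrow> det3 u v w = 0"
proof
  assume "pcollinear (proj_point u) (proj_point v) (proj_point w)"
  then obtain a where a: "a \<noteq> (0,0,0)" "proj_point u \<in> pline a" "proj_point v \<in> pline a"
     "proj_point w \<in> pline a" by (auto simp: pcollinear_def plines_def)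
  then have d: "dot3 a u = 0" "dot3 a v = 0" "dot3 a w = 0"
    using in_pline_iff[OF assms(1)] in_pline_iff[OF assms(2)] in_pline_iff[OF assms(3)] by blast+
  obtain c where "cross u v = smul3 c a" using cross_parallel d a by blast
  then show "det3 u v w = 0" using d(3) by (simp add: det_cyc dot_comm[of w] dot_smul_left)
next
  assume "det3 u v w = 0"
  then have "dot3 (cross u v) w = 0" by (simp add: det_cyc dot_comm)
  moreover have "dot3 (cross u v) u = 0" "dot3 (cross u v) v = 0"
    using cross_dot1 cross_dot2 dot_comm by metis+
  ultimately show "pcollinear (proj_point u) (proj_point v) (proj_point w)"
    using assms in_pline_iff unfolding pcollinear_def plines_def by blast
qed

lemma pcollinear_perm:
  "pcollinear P Q R \<Longrightarrow> pcollinear Q P R"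
  "pcollinear P Q R \<Longrightarrow> pcollinear P R Q"
  by (auto simp: pcollinear_def)

lemma PG2_rep: "P \<in> PG2 \<Longrightarrow> \<exists>v. v \<noteq> (0,0,0) \<and> P = proj_point v"
  by (auto simp: PG2_def)

lemma dot_lin: "dot3 (add3 (smul3 a p) (smul3 b r)) x = a * dot3 p x + b * dot3 r x"
  by (cases p; cases r; cases x) (simp add: vdefs algebra_simps)

lemma dot_add_l: "dot3 (add3 u v) a = dot3 u a + dot3 v a"
  by (cases a; cases u; cases v) (simp add: vdefs algebra_simps)

lemma cross_zero_l: "cross (0,0,0) v = (0,0,0)" and cross_zero_r: "cross v (0,0,0) = (0,0,0)"
  by (cases v; simp add: vdefs)+

lemma dot_zero_all: "(\<And>x. dot3 w x = 0) \<Longrightarrow> w = (0,0,0)"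
proof -
  assume h: "\<And>x. dot3 w x = 0"
  obtain w1 w2 w3 where w: "w = (w1,w2,w3)" by (cases w)
  have "w1 = 0" using h[of "(1,0,0)"] by (simp add: w dot3_def)
  moreover have "w2 = 0" using h[of "(0,1,0)"] by (simp add: w dot3_def)
  moreover have "w3 = 0" using h[of "(0,0,1)"] by (simp add: w dot3_def)
  ultimately show ?thesis by (simp add: w)
qed

lemma lin_prod_of_fun:
  assumes "\<And>x. qeval q x = dot3 l x * dot3 m x"
  shows "q = lin_prod l m"
proof -
  obtain a b c d e f where q: "q = (a,b,c,d,e,f)" by (cases q)
  obtain l1 l2 l3 where l: "l = (l1,l2,l3)" by (cases l)
  obtain m1 m2 m3 where m: "m = (m1,m2,m3)" by (cases m)
  have 1: "a = l1*m1" using assms[of "(1,0,0)"] by (simp add: q l m vdefs)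
  have 2: "b = l2*m2" using assms[of "(0,1,0)"] by (simp add: q l m vdefs)
  have 3: "c = l3*m3" using assms[of "(0,0,1)"] by (simp add: q l m vdefs)
  have 4: "a+b+d = (l1+l2)*(m1+m2)" using assms[of "(1,1,0)"] by (simp add: q l m vdefs)
  have 5: "a+c+e = (l1+l3)*(m1+m3)" using assms[of "(1,0,1)"] by (simp add: q l m vdefs)
  have 6: "b+c+f = (l2+l3)*(m2+m3)" using assms[of "(0,1,1)"] by (simp add: q l m vdefs)
  have "d = l1*m2+l2*m1" using 1 2 4 by (simp add: algebra_simps)
  moreover have "e = l1*m3+l3*m1" using 1 3 5 by (simp add: algebra_simps)
  moreover have "f = l2*m3+l3*m2" using 2 3 6 by (simp add: algebra_simps)
  ultimately show ?thesis using 1 2 3 by (simp add: q l m lin_prod_def)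
qed

lemma expand3:
  "qeval q (add3 (smul3 a u) (add3 (smul3 b v) (smul3 c w))) =
     a^2 * qeval q u + b^2 * qeval q v + c^2 * qeval q w
     + a*b * pol q u v + a*c * pol q u w + b*c * pol q v w"
  by (simp add: q_add q_smul pol_add pol_smul pol_smul_l algebra_simps)

lemma expand2:
  "qeval q (add3 (smul3 a u) (smul3 b v)) = a^2 * qeval q u + b^2 * qeval q v + a*b * pol q u v"
  by (simp add: q_add q_smul pol_add pol_smul pol_smul_l algebra_simps)

lemma cross_comp_nonzero:
  assumes "cross u v \<noteq> (0,0,0)"
  shows "\<exists>z. det3 u v z \<noteq> 0"
proof -
  obtain c1 c2 c3 where c: "cross u v = (c1,c2,c3)" by (cases "cross u v")
  have "det3 u v (1,0,0) = c1" "det3 u v (0,1,0) = c2" "det3 u v (0,0,1) = c3"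
    by (simp_all add: det_cyc c dot3_def)
  then show ?thesis using assms c by (metis)
qed

lemma reducible_plane:
  assumes "qeval q u = 0" "qeval q v = 0" "pol q u v = 0" "cross u v \<noteq> (0,0,0)"
  shows "\<not> irreducible_qform q"
proof -
  obtain z where z: "det3 u v z \<noteq> 0" using cross_comp_nonzero assms(4) by blast
  define D where "D = det3 u v z"
  define l where "l = smul3 (1/D^2) (cross u v)"
  define m where "m = add3 (smul3 (qeval q z) (cross u v))
                     (add3 (smul3 (pol q v z) (cross z u)) (smul3 (pol q u z) (cross v z)))"
  have "qeval q x = dot3 l x * dot3 m x" for x
  proof -
    have "smul3 D x = add3 (smul3 (dot3 (cross v z) x) u)
      (add3 (smul3 (dot3 (cross z u) x) v) (smul3 (dot3 (cross u v) x) z))"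
      unfolding D_def by (rule cramer)
    then have "D^2 * qeval q x = qeval q (add3 (smul3 (dot3 (cross v z) x) u)
      (add3 (smul3 (dot3 (cross z u) x) v) (smul3 (dot3 (cross u v) x) z)))"
      by (metis q_smul)
    also have "\<dots> = dot3 (cross u v) x * dot3 m x"
      unfolding expand3 m_def using assms(1-3)
      by (simp add: dot_add_l dot_smul_left power2_eq_square algebra_simps)
    finally show ?thesis using z unfolding l_def D_def by (simp add: dot_smul_left field_simps)
  qed
  then have "q = lin_prod l m" by (rule lin_prod_of_fun)
  then show ?thesis unfolding irreducible_qform_def by blast
qed

lemma lin_indep:
  assumes "cross p1 p2 \<noteq> (0,0,0)" "add3 (smul3 a p1) (smul3 b p2) = (0,0,0)"
  shows "a = 0 \<and> b = 0"
proof -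
  have "cross (add3 (smul3 a p1) (smul3 b p2)) p2 = smul3 a (cross p1 p2)"
    "cross p1 (add3 (smul3 a p1) (smul3 b p2)) = smul3 b (cross p1 p2)"
    by (cases p1; cases p2; simp add: vdefs algebra_simps)+
  then have "smul3 a (cross p1 p2) = (0,0,0)" "smul3 b (cross p1 p2) = (0,0,0)"
    using assms(2) by (metis cross_zero_l cross_zero_r)+
  then show ?thesis using assms(1) by (simp add: smul_zero_iff)
qed

lemma alg_root2:
  fixes A B C :: "'k::alg_closed_field"
  assumes "A \<noteq> 0"
  shows "\<exists>x. A*x^2 + B*x + C = 0"
proof -
  let ?f = "\<lambda>k::nat. if k = 0 then C else if k = 1 then B else A"
  obtain x where "(\<Sum>k\<le>2. ?f k * x ^ k) = 0" using alg_closed[of 2 ?f] assms by auto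
  then show ?thesis by (auto simp: numeral_2_eq_2 algebra_simps)
qed

lemma alg_sqrt:
  fixes d :: "'k::alg_closed_field"
  shows "\<exists>r. r^2 = d"
  using alg_root2[of 1 0 "-d"] by (auto simp: algebra_simps)

lemma quad_root:
  fixes q :: "'k::alg_closed_field qform"
  assumes "cross p1 p2 \<noteq> (0,0,0)"
  shows "\<exists>a b. (a \<noteq> 0 \<or> b \<noteq> 0) \<and> qeval q (add3 (smul3 a p1) (smul3 b p2)) = 0"
proof (cases "qeval q p1 = 0")
  case True
  then show ?thesis using expand2[of q 1 p1 0 p2] by (intro exI[of _ 1] exI[of _ 0]) simp
next
  case False
  then obtain x where "qeval q p1 * x^2 + pol q p1 p2 * x + qeval q p2 = 0"
    using alg_root2 by blast
  moreover have "qeval q (add3 (smul3 x p1) (smul3 1 p2)) = x^2 * qeval q p1 + 1^2 * qeval q p2 + x*1 * pol q p1 p2"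
    by (rule expand2)
  ultimately have "qeval q (add3 (smul3 x p1) (smul3 1 p2)) = 0" by (simp add: algebra_simps)
  then show ?thesis by (metis one_neq_zero)
qed

lemma kernel_basis:
  assumes "a \<noteq> (0,0,0)"
  shows "\<exists>p1 p2. dot3 a p1 = 0 \<and> dot3 a p2 = 0 \<and> cross p1 p2 \<noteq> (0,0,0)"
proof -
  obtain a1 a2 a3 where a: "a = (a1,a2,a3)" by (cases a)
  show ?thesis
  proof (cases "a1 \<noteq> 0")
    case True
    show ?thesis
      by (rule exI[of _ "(a2,-a1,0)"], rule exI[of _ "(a3,0,-a1)"]) (use True in \<open>simp add: a vdefs algebra_simps\<close>)
  next
    case F: False
    show ?thesis
    proof (cases "a2 \<noteq> 0")
      case True
      show ?thesis
        by (rule exI[of _ "(a2,-a1,0)"], rule exI[of _ "(0,a3,-a2)"]) (use True in \<open>simp add: a vdefs algebra_simps\<close>)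
    next
      case False
      then have "a3 \<noteq> 0" using F assms a by auto
      then show ?thesis
        by (intro exI[of _ "(a3,0,-a1)"] exI[of _ "(0,a3,-a2)"]) (simp add: a vdefs algebra_simps)
    qed
  qed
qed

lemma q_zero[simp]: "qeval q (0,0,0) = 0"
  by (cases q) (simp add: qeval_def)

lemma grad_zero_pol: "grad q u = (0,0,0) \<Longrightarrow> pol q u v = 0"
  by (cases v) (simp add: pol_def dot3_def)

lemma cross_comb1: "cross e (add3 (smul3 a e) (smul3 b w)) = smul3 b (cross e w)"
  by (cases e; cases w) (simp add: vdefs algebra_simps)
lemma cross_comb1': "cross e (add3 (smul3 a e) w) = cross e w"
  by (cases e; cases w) (simp add: vdefs algebra_simps)
lemma cross_comb2: "cross (add3 (smul3 a p1) (smul3 b p2)) p1 = smul3 b (cross p2 p1)"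
  by (cases p1; cases p2) (simp add: vdefs algebra_simps)
lemma cross_comb3: "cross (add3 (smul3 a p1) (smul3 b p2)) p2 = smul3 a (cross p1 p2)"
  by (cases p1; cases p2) (simp add: vdefs algebra_simps)
lemma cross_neg_nz: "cross p1 p2 \<noteq> (0,0,0) \<Longrightarrow> cross p2 p1 \<noteq> (0,0,0)"
  by (cases p1; cases p2) (auto simp: vdefs algebra_simps)
lemma smul_nz: "c \<noteq> 0 \<Longrightarrow> u \<noteq> (0,0,0) \<Longrightarrow> smul3 c u \<noteq> (0,0,0)"
  by (simp add: smul_zero_iff)
lemma dot_zero_r[simp]: "dot3 a (0,0,0) = 0"
  by (cases a) (simp add: dot3_def)
lemma cross_swap_eq: "cross w e = smul3 (-1) (cross e w)"
  by (rule cross_anti)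

lemma obtain_e:
  fixes q :: "'k::alg_closed_field qform"
  assumes "a \<noteq> (0,0,0)"
  shows "\<exists>e w. e \<noteq> (0,0,0) \<and> dot3 a e = 0 \<and> qeval q e = 0 \<and> dot3 a w = 0 \<and> cross e w \<noteq> (0,0,0)"
proof -
  obtain p1 p2 where p: "dot3 a p1 = 0" "dot3 a p2 = 0" "cross p1 p2 \<noteq> (0,0,0)"
    using kernel_basis[OF assms] by blast
  obtain l m where lm: "l \<noteq> 0 \<or> m \<noteq> 0" "qeval q (add3 (smul3 l p1) (smul3 m p2)) = 0"
    using quad_root[OF p(3)] by blast
  define e where "e = add3 (smul3 l p1) (smul3 m p2)"
  have e0: "e \<noteq> (0,0,0)" using lin_indep[OF p(3)] lm(1) unfolding e_def by blast
  have ae: "dot3 a e = 0" unfolding e_def by (simp add: dot_add dot_smul p)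
  show ?thesis
  proof (cases "m \<noteq> 0")
    case True
    have "cross e p1 \<noteq> (0,0,0)" unfolding e_def cross_comb2
      using True cross_neg_nz[OF p(3)] by (simp add: smul_zero_iff)
    then show ?thesis using e0 ae lm(2) p e_def by blast
  next
    case False
    then have "l \<noteq> 0" using lm by auto
    then have "cross e p2 \<noteq> (0,0,0)" unfolding e_def cross_comb3
      using p(3) by (simp add: smul_zero_iff)
    then show ?thesis using e0 ae lm(2) p e_def by blast
  qed
qed

definition nbasis :: "'k::field qform \<Rightarrow> 'k vec3 \<Rightarrow> 'k vec3 \<Rightarrow> 'k vec3 \<Rightarrow> bool" where
  "nbasis q e f g \<longleftrightarrow> qeval q e = 0 \<and> qeval q f = 0 \<and> pol q e g = 0 \<and> pol q f g = 0 \<and>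
     pol q e f \<noteq> 0 \<and> qeval q g \<noteq> 0"

lemma normal_basis:
  fixes q :: "'k::alg_closed_field qform"
  assumes irr: "irreducible_qform q" and a: "a \<noteq> (0,0,0)" and two: "(2::'k) \<noteq> 0"
  shows "\<exists>e f g c. nbasis q e f g \<and> c \<noteq> 0 \<and> (cross e f = smul3 c a \<or> cross g e = smul3 c a)"
proof -
  obtain e w where ew: "e \<noteq> (0,0,0)" "dot3 a e = 0" "qeval q e = 0" "dot3 a w = 0" "cross e w \<noteq> (0,0,0)"
    using obtain_e[OF a] by blast
  obtain c0 where c0: "cross e w = smul3 c0 a" using cross_parallel[OF ew(2) ew(4) a] by blast
  have c0nz: "c0 \<noteq> 0" using c0 ew(5) by (auto simp: smul3_def)
  have pee: "pol q e e = 0" using ew(3) by (simp add: pol_self)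
  show ?thesis
  proof (cases "pol q e w \<noteq> 0")
    case True
    define pe where "pe = pol q e w"
    define f where "f = add3 (smul3 (- qeval q w) e) (smul3 pe w)"
    have qf: "qeval q f = 0" unfolding f_def expand2 pe_def using ew(3)
      by (simp add: power2_eq_square algebra_simps)
    have h: "pol q e f = pe * pe" unfolding f_def
      by (simp add: pol_add pol_smul pee pe_def)
    have hnz: "pol q e f \<noteq> 0" using h True pe_def by simp
    have cef: "cross e f = smul3 (pe * c0) a" unfolding f_def cross_comb1 c0 by (simp add: smul_smul)
    define g where "g = cross (grad q e) (grad q f)"
    have eg: "pol q e g = 0" unfolding g_def pol_def by (rule cross_dot1)
    have fg: "pol q f g = 0" unfolding g_def pol_def by (rule cross_dot2)
    have g0: "g \<noteq> (0,0,0)"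
    proof
      assume g0: "g = (0,0,0)"
      have "grad q e \<noteq> (0,0,0)" using hnz grad_zero_pol by blast
      then obtain c where c: "grad q f = smul3 c (grad q e)" using cross_zero_prop g0 unfolding g_def by metis
      have "pol q f f = c * pol q e f" by (simp add: pol_def c dot_smul_left)
      moreover have "pol q f f = 0" using qf by (simp add: pol_self)
      ultimately have "c = 0" using hnz by simp
      then have "pol q f e = 0" by (simp add: pol_def c dot_smul_left)
      then show False using hnz pol_sym[of q f e] by simp
    qed
    have qg: "qeval q g \<noteq> 0"
    proof
      assume qg: "qeval q g = 0"
      have "cross e g \<noteq> (0,0,0)"
      proof
        assume "cross e g = (0,0,0)"
        then obtain c where c: "g = smul3 c e" using cross_zero_prop ew(1) by blast
        then have "c * pol q f e = 0" using fg by (simp add: pol_smul)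
        then have "c = 0" using hnz pol_sym[of q f e] by simp
        then show False using g0 c by (simp add: smul3_def split: prod.splits)
      qed
      then show False using reducible_plane[OF ew(3) qg eg] irr by blast
    qed
    show ?thesis
      using ew(3) qf eg fg hnz qg cef c0nz True pe_def unfolding nbasis_def
      by (intro exI[of _ e] exI[of _ f] exI[of _ g] exI[of _ "pe * c0"]) auto
  next
    case False
    then have pew: "pol q e w = 0" by simp
    have qw: "qeval q w \<noteq> 0" using reducible_plane[OF ew(3) _ pew ew(5)] irr by blast
    have w0: "w \<noteq> (0,0,0)" using qw by auto
    have gw: "grad q w \<noteq> (0,0,0)"
    proof
      assume "grad q w = (0,0,0)"
      then have "pol q w w = 0" by (rule grad_zero_pol)
      then show False using qw two by (simp add: pol_self)
    qed
    obtain m1 m2 where m: "dot3 (grad q w) m1 = 0" "dot3 (grad q w) m2 = 0" "cross m1 m2 \<noteq> (0,0,0)"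
      using kernel_basis[OF gw] by blast
    obtain m where mm: "pol q w m = 0" "cross e m \<noteq> (0,0,0)"
    proof -
      have "cross e m1 \<noteq> (0,0,0) \<or> cross e m2 \<noteq> (0,0,0)"
      proof (rule ccontr)
        assume "\<not> ?thesis"
        then obtain c1 c2 where "m1 = smul3 c1 e" "m2 = smul3 c2 e"
          using cross_zero_prop ew(1) by blast
        then have "cross m1 m2 = (0,0,0)" by (cases e) (simp add: vdefs algebra_simps)
        then show False using m(3) by simp
      qed
      then show ?thesis using that m unfolding pol_def by blast
    qed
    have cgw: "cross w e = smul3 (- c0) a" using c0 cross_swap_eq[of w e] by (simp add: smul_smul)
    have pwe: "pol q w e = 0" using pew pol_sym by metis
    show ?thesis
    proof (cases "pol q e m \<noteq> 0")
      case True
      define lam where "lam = - qeval q m / pol q e m"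
      define f where "f = add3 (smul3 lam e) m"
      have "qeval q f = lam^2 * qeval q e + 1^2 * qeval q m + lam * 1 * pol q e m"
        using expand2[of q lam e 1 m] unfolding f_def by simp
      then have qf: "qeval q f = 0" using ew(3) True unfolding lam_def by (simp add: field_simps)
      have hf: "pol q e f = pol q e m" unfolding f_def by (simp add: pol_add pol_smul pee)
      have fw: "pol q f w = 0" unfolding f_def using pew mm(1) pol_sym[of q m w]
        by (simp add: pol_add_l pol_smul_l)
      show ?thesis
        using ew(3) qf pew fw hf True qw cgw c0nz unfolding nbasis_def
        by (intro exI[of _ e] exI[of _ f] exI[of _ w] exI[of _ "-c0"]) auto
    next
      case False
      then have pem: "pol q e m = 0" by simp
      have cwm: "cross w m \<noteq> (0,0,0)"
      proof
        assume "cross w m = (0,0,0)"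
        then obtain c where c: "m = smul3 c w" using cross_zero_prop w0 by blast
        then have "c * (2 * qeval q w) = 0" using mm(1) by (simp add: pol_smul pol_self)
        then have "c = 0" using two qw by simp
        then show False using c mm(2) by (simp add: smul3_def cross_zero_r split: prod.splits)
      qed
      obtain l u where lu: "l \<noteq> 0 \<or> u \<noteq> 0" "qeval q (add3 (smul3 l w) (smul3 u m)) = 0"
        using quad_root[OF cwm] by blast
      define z where "z = add3 (smul3 l w) (smul3 u m)"
      have z0: "z \<noteq> (0,0,0)" using lin_indep[OF cwm] lu(1) unfolding z_def by blast
      have pez: "pol q e z = 0" unfolding z_def by (simp add: pol_add pol_smul pew pem)
      have cez: "cross e z \<noteq> (0,0,0)"
      proof
        assume "cross e z = (0,0,0)"
        then obtain c where c: "z = smul3 c e" using cross_zero_prop ew(1) by blast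
        have "pol q w z = l * (2 * qeval q w)" unfolding z_def
          by (simp add: pol_add pol_smul pol_self mm(1))
        moreover have "pol q w z = 0" using c pwe by (simp add: pol_smul)
        ultimately have l0: "l = 0" using two qw by simp
        then have u0: "u \<noteq> 0" using lu by simp
        have "z = smul3 u m" using l0 unfolding z_def by (cases w; cases m) (simp add: vdefs)
        then have "m = smul3 (c / u) e" using c u0 by (cases m; cases e) (auto simp: vdefs field_simps)
        then have "cross e m = (0,0,0)" by (simp add: prop_cross)
        then show False using mm(2) by simp
      qed
      show ?thesis using reducible_plane[OF ew(3) lu(2)[folded z_def] pez cez] irr by blast
    qed
  qed
qed

definition Tm :: "'k::field vec3 \<Rightarrow> 'k vec3 \<Rightarrow> 'k vec3 \<Rightarrow> 'k vec3 \<Rightarrow> 'k vec3" where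
  "Tm e f g x = (dot3 (cross f g) x, dot3 (cross g e) x, dot3 (cross e f) x)"

lemma det_lin: "det3 (dot3 p1 u, dot3 p2 u, dot3 p3 u) (dot3 p1 v, dot3 p2 v, dot3 p3 v) (dot3 p1 w, dot3 p2 w, dot3 p3 w)
   = det3 p1 p2 p3 * det3 u v w"
  by (cases p1; cases p2; cases p3; cases u; cases v; cases w) (simp add: vdefs algebra_simps)
lemma det_cross: "det3 (cross f g) (cross g e) (cross e f) = (det3 e f g)^2"
  by (cases e; cases f; cases g) (simp add: vdefs power2_eq_square algebra_simps)
lemma detT: "det3 (Tm e f g u) (Tm e f g v) (Tm e f g w) = (det3 e f g)^2 * det3 u v w"
  unfolding Tm_def det_lin det_cross ..

lemma pol_zero_r: "pol q u (0,0,0) = 0"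
  by (simp add: pol_def)

lemma det_nz:
  fixes q :: "'k::field qform"
  assumes nb: "nbasis q e f g" and two: "(2::'k) \<noteq> 0"
  shows "det3 e f g \<noteq> 0"
proof
  assume D0: "det3 e f g = 0"
  have nbf: "qeval q e = 0" "qeval q f = 0" "pol q e g = 0" "pol q f g = 0" "pol q e f \<noteq> 0" "qeval q g \<noteq> 0"
    using nb by (auto simp: nbasis_def)
  have pee: "pol q e e = 0" "pol q f f = 0" using nbf by (simp_all add: pol_self)
  have pfe: "pol q f e = pol q e f" by (rule pol_sym)
  have cr: "add3 (smul3 (dot3 (cross f g) x) e)
      (add3 (smul3 (dot3 (cross g e) x) f) (smul3 (dot3 (cross e f) x) g)) = (0,0,0)" for x
    using cramer[of e f g x] D0 by (simp add: smul3_def split: prod.splits)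
  have "dot3 (cross g e) x * pol q e f = 0" for x
    using arg_cong[OF cr[of x], of "pol q e"] by (simp add: pol_add pol_smul pee nbf pol_zero_r)
  then have "dot3 (cross g e) x = 0" for x using nbf(5) by simp
  then have cge: "cross g e = (0,0,0)" by (rule dot_zero_all)
  have "dot3 (cross f g) x * pol q e f = 0" for x
    using arg_cong[OF cr[of x], of "pol q f"] by (simp add: pol_add pol_smul pee nbf pol_zero_r pfe)
  then have "dot3 (cross f g) x = 0" for x using nbf(5) by simp
  then have cfg: "cross f g = (0,0,0)" by (rule dot_zero_all)
  have g0: "g \<noteq> (0,0,0)" using nbf(6) by auto
  obtain c1 where c1: "e = smul3 c1 g" using cross_zero_prop[OF cge g0] by blast
  have "c1 * (2 * qeval q g) = 0" using nbf(3) by (simp add: c1 pol_smul_l pol_self)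
  then have "c1 = 0" using two nbf(6) by simp
  then have "e = (0,0,0)" using c1 by (simp add: smul3_def split: prod.splits)
  then have "pol q e f = 0" using pol_sym[of q e f] pol_zero_r[of q f] by simp
  then show False using nbf(5) by simp
qed

lemma qnorm:
  fixes q :: "'k::field qform"
  assumes nb: "nbasis q e f g"
  shows "(det3 e f g)^2 * qeval q x = pol q e f * (dot3 (cross f g) x * dot3 (cross g e) x)
            + qeval q g * (dot3 (cross e f) x)^2"
proof -
  have nbf: "qeval q e = 0" "qeval q f = 0" "pol q e g = 0" "pol q f g = 0"
    using nb by (auto simp: nbasis_def)
  have "(det3 e f g)^2 * qeval q x = qeval q (smul3 (det3 e f g) x)" by (simp add: q_smul)
  also have "\<dots> = qeval q (add3 (smul3 (dot3 (cross f g) x) e)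
      (add3 (smul3 (dot3 (cross g e) x) f) (smul3 (dot3 (cross e f) x) g)))"
    by (simp add: cramer)
  also have "\<dots> = pol q e f * (dot3 (cross f g) x * dot3 (cross g e) x)
            + qeval q g * (dot3 (cross e f) x)^2"
    unfolding expand3 using nbf by (simp add: algebra_simps)
  finally show ?thesis .
qed

definition Cr :: "'k::field vec3 \<Rightarrow> 'k vec3 \<Rightarrow> 'k vec3 \<Rightarrow> 'k vec3 \<Rightarrow> 'k vec3" where
  "Cr e f g t = (case t of (a,b,c) \<Rightarrow> add3 (smul3 a e) (add3 (smul3 b f) (smul3 c g)))"

lemma Cr_T: "smul3 (det3 e f g) x = Cr e f g (Tm e f g x)"
  by (simp add: Cr_def Tm_def cramer)
lemma Cr_smul: "Cr e f g (smul3 c t) = smul3 c (Cr e f g t)"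
  by (cases e; cases f; cases g; cases t) (simp add: Cr_def vdefs algebra_simps)
lemma smul_cancel: "D \<noteq> 0 \<Longrightarrow> smul3 D u = smul3 D v \<Longrightarrow> u = v"
  by (cases u; cases v) (simp add: smul3_def)
lemma T_smul: "Tm e f g (smul3 c x) = smul3 c (Tm e f g x)"
  by (simp add: Tm_def dot_smul) (simp add: smul3_def)

lemma T_inj:
  assumes "det3 e f g \<noteq> 0" "Tm e f g u = smul3 c (Tm e f g v)"
  shows "u = smul3 c v"
proof -
  have "smul3 (det3 e f g) u = smul3 c (smul3 (det3 e f g) v)"
    by (simp add: Cr_T assms(2) Cr_smul)
  also have "\<dots> = smul3 (det3 e f g) (smul3 c v)" by (simp add: smul_smul mult.commute)
  finally show ?thesis using smul_cancel assms(1) by blast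
qed

lemma T_nz:
  assumes "det3 e f g \<noteq> 0" "x \<noteq> (0,0,0)"
  shows "Tm e f g x \<noteq> (0,0,0)"
proof
  assume "Tm e f g x = (0,0,0)"
  then have "Tm e f g x = smul3 0 (Tm e f g x)" by (simp add: smul3_def)
  then have "x = smul3 0 x" by (rule T_inj[OF assms(1)])
  then show False using assms(2) by (simp add: smul3_def split: prod.splits)
qed

lemma det_param:
  assumes "\<rho> \<noteq> 0"
  shows "det3 (smul3 B1 (s^2, 1, s/\<rho>)) (smul3 B2 (t^2, 1, t/\<rho>)) (a,b,c)
     = B1 * B2 * (t - s) * ((a + s*t*b) - \<rho>*(s+t)*c) / \<rho>"
  using assms by (simp add: vdefs field_simps power2_eq_square)

definition tpar :: "'k::field vec3 \<Rightarrow> 'k vec3 \<Rightarrow> 'k vec3 \<Rightarrow> 'k \<Rightarrow> 'k vec3 \<Rightarrow> 'k" where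
  "tpar e f g \<rho> x = \<rho> * dot3 (cross e f) x / dot3 (cross g e) x"

locale nsetup =
  fixes q :: "'k::field qform" and e f g :: "'k vec3" and \<rho> :: 'k
  assumes nb: "nbasis q e f g" and two: "(2::'k) \<noteq> 0"
    and rho: "\<rho>^2 * pol q e f = - qeval q g"
begin

abbreviation "A x \<equiv> dot3 (cross f g) x"
abbreviation "B x \<equiv> dot3 (cross g e) x"
abbreviation "G x \<equiv> dot3 (cross e f) x"
abbreviation "tp x \<equiv> tpar e f g \<rho> x"

lemma D0: "det3 e f g \<noteq> 0" using det_nz[OF nb two] .
lemma h0: "pol q e f \<noteq> 0" using nb by (simp add: nbasis_def)
lemma k0: "qeval q g \<noteq> 0" using nb by (simp add: nbasis_def)
lemma rho0: "\<rho> \<noteq> 0" using rho k0 by auto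

lemma onC: "qeval q u = 0 \<Longrightarrow> A u * B u = \<rho>^2 * (G u)^2"
proof -
  assume "qeval q u = 0"
  then have "pol q e f * (A u * B u) + qeval q g * (G u)^2 = 0" using qnorm[OF nb, of u] by simp
  moreover have "qeval q g = - (\<rho>^2 * pol q e f)" using rho by simp
  ultimately have "pol q e f * (A u * B u - \<rho>^2 * (G u)^2) = 0" by (simp add: algebra_simps)
  then show ?thesis using h0 by simp
qed

lemma param: "qeval q u = 0 \<Longrightarrow> B u \<noteq> 0 \<Longrightarrow> Tm e f g u = smul3 (B u) ((tp u)^2, 1, tp u / \<rho>)"
proof -
  assume a: "qeval q u = 0" "B u \<noteq> 0"
  have "A u = \<rho>^2 * (G u)^2 / B u" using onC[OF a(1)] a(2) by (simp add: field_simps)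
  then show ?thesis using a rho0 by (simp add: Tm_def smul3_def tpar_def field_simps power2_eq_square)
qed

lemma tp_inj:
  assumes "u \<noteq> (0,0,0)" "v \<noteq> (0,0,0)" "qeval q u = 0" "qeval q v = 0" "B u \<noteq> 0" "B v \<noteq> 0"
  shows "tp u = tp v \<longleftrightarrow> proj_point u = proj_point v"
proof
  assume t: "tp u = tp v"
  have "Tm e f g u = smul3 (B u / B v) (Tm e f g v)"
    using param[OF assms(3,5)] param[OF assms(4,6)] t assms(6) by (simp add: smul_smul)
  then have "u = smul3 (B u / B v) v" by (rule T_inj[OF D0])
  moreover have "B u / B v \<noteq> 0" using assms(5,6) by simp
  ultimately have "\<exists>c. c \<noteq> 0 \<and> u = smul3 c v" by blast
  then show "proj_point u = proj_point v" using proj_point_eq_iff[OF assms(2)] by metis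
next
  assume "proj_point u = proj_point v"
  then obtain c where c: "c \<noteq> 0" "v = smul3 c u" using proj_point_eq_iff[OF assms(1)] by blast
  then show "tp u = tp v" by (simp add: tpar_def dot_smul)
qed

lemma coll:
  assumes "u \<noteq> (0,0,0)" "v \<noteq> (0,0,0)" "qeval q u = 0" "qeval q v = 0" "B u \<noteq> 0" "B v \<noteq> 0"
    and "proj_point u \<noteq> proj_point v" and "w \<noteq> (0,0,0)"
  shows "pcollinear (proj_point u) (proj_point v) (proj_point w) \<longleftrightarrow>
     (A w + tp u * tp v * B w) - \<rho> * (tp u + tp v) * G w = 0"
proof -
  have cuv: "cross u v \<noteq> (0,0,0)" using proj_point_eq_cross[OF assms(1,2)] assms(7) by blast
  have tne: "tp u \<noteq> tp v" using tp_inj[OF assms(1-6)] assms(7) by blast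
  have "pcollinear (proj_point u) (proj_point v) (proj_point w) \<longleftrightarrow> det3 u v w = 0"
    by (rule pcollinear_iff[OF assms(1,2,8) cuv])
  also have "\<dots> \<longleftrightarrow> det3 (Tm e f g u) (Tm e f g v) (Tm e f g w) = 0"
    using D0 by (simp add: detT)
  also have "\<dots> \<longleftrightarrow> (A w + tp u * tp v * B w) - \<rho> * (tp u + tp v) * G w = 0"
    unfolding param[OF assms(3,5)] param[OF assms(4,6)]
    by (simp add: Tm_def det_param[OF rho0] assms(5,6) rho0 tne[symmetric])
  finally show ?thesis .
qed

end

definition model_props :: "'k::field qform \<Rightarrow> 'k vec3 \<Rightarrow> ('k vec3 \<Rightarrow> 'k) \<Rightarrow> ('k vec3 \<Rightarrow> 'k) \<Rightarrow> ('k vec3 \<Rightarrow> bool) \<Rightarrow> bool \<Rightarrow> bool" where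
 "model_props q a tp vp nd sec \<longleftrightarrow>
   (\<forall>u v. u \<noteq> (0,0,0) \<and> qeval q u = 0 \<and> dot3 a u \<noteq> 0 \<and> v \<noteq> (0,0,0) \<and> qeval q v = 0 \<and> dot3 a v \<noteq> 0
      \<longrightarrow> (tp u = tp v \<longleftrightarrow> proj_point u = proj_point v)) \<and>
   (sec \<longrightarrow> (\<forall>u. u \<noteq> (0,0,0) \<and> qeval q u = 0 \<and> dot3 a u \<noteq> 0 \<longrightarrow> tp u \<noteq> 0)) \<and>
   (\<forall>u v w. u \<noteq> (0,0,0) \<and> qeval q u = 0 \<and> dot3 a u \<noteq> 0 \<and> v \<noteq> (0,0,0) \<and> qeval q v = 0 \<and> dot3 a v \<noteq> 0
       \<and> proj_point u \<noteq> proj_point v \<and> w \<noteq> (0,0,0) \<and> dot3 a w = 0 \<longrightarrow>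
      (pcollinear (proj_point u) (proj_point v) (proj_point w) \<longleftrightarrow>
         nd w \<and> (if sec then tp u * tp v else tp u + tp v) = vp w)) \<and>
   (\<forall>w w'. w \<noteq> (0,0,0) \<and> dot3 a w = 0 \<and> nd w \<and> w' \<noteq> (0,0,0) \<and> dot3 a w' = 0 \<and> nd w'
      \<longrightarrow> (vp w = vp w' \<longleftrightarrow> proj_point w = proj_point w'))"

context nsetup begin

lemma model_sec:
  assumes c: "cross e f = smul3 c a" "c \<noteq> 0"
  shows "model_props q a tp (\<lambda>w. - A w / B w) (\<lambda>w. B w \<noteq> 0) True"
proof -
  have Gl: "G x = c * dot3 a x" for x using c by (simp add: dot_smul_left)
  have Bnz: "B u \<noteq> 0" if "qeval q u = 0" "dot3 a u \<noteq> 0" for u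
  proof
    assume "B u = 0"
    then have "\<rho>^2 * (G u)^2 = 0" using onC[OF that(1)] by simp
    then show False using rho0 Gl[of u] c(2) that(2) by simp
  qed
  have tpnz: "tp u \<noteq> 0" if "qeval q u = 0" "dot3 a u \<noteq> 0" for u
    using Bnz[OF that] rho0 Gl[of u] c(2) that(2) by (simp add: tpar_def)
  have P3: "pcollinear (proj_point u) (proj_point v) (proj_point w) \<longleftrightarrow>
         B w \<noteq> 0 \<and> tp u * tp v = - A w / B w"
    if h: "u \<noteq> (0,0,0)" "qeval q u = 0" "dot3 a u \<noteq> 0" "v \<noteq> (0,0,0)" "qeval q v = 0" "dot3 a v \<noteq> 0"
      "proj_point u \<noteq> proj_point v" "w \<noteq> (0,0,0)" "dot3 a w = 0" for u v w
  proof -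
    have Gw: "G w = 0" using Gl[of w] h(9) by simp
    have "pcollinear (proj_point u) (proj_point v) (proj_point w) \<longleftrightarrow> A w + tp u * tp v * B w = 0"
      using coll[OF h(1,4,2,5) Bnz[OF h(2,3)] Bnz[OF h(5,6)] h(7,8)] Gw by simp
    also have "\<dots> \<longleftrightarrow> B w \<noteq> 0 \<and> tp u * tp v = - A w / B w"
    proof (cases "B w = 0")
      case True
      have "A w \<noteq> 0" using T_nz[OF D0 h(8)] True Gw by (simp add: Tm_def)
      then show ?thesis using True by simp
    next
      case False
      have "tp u * tp v = - A w / B w \<longleftrightarrow> tp u * tp v * B w = - A w" using False by (simp add: field_simps)
      also have "\<dots> \<longleftrightarrow> A w + tp u * tp v * B w = 0" by (metis add.commute eq_neg_iff_add_eq_0)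
      finally show ?thesis using False by simp
    qed
    finally show ?thesis .
  qed
  have P4: "(- A w / B w = - A w' / B w') \<longleftrightarrow> proj_point w = proj_point w'"
    if h: "w \<noteq> (0,0,0)" "dot3 a w = 0" "B w \<noteq> 0" "w' \<noteq> (0,0,0)" "dot3 a w' = 0" "B w' \<noteq> 0" for w w'
  proof
    assume eq: "- A w / B w = - A w' / B w'"
    have Gw: "G w = 0" "G w' = 0" using Gl h by auto
    have "Tm e f g w = smul3 (B w / B w') (Tm e f g w')"
      using eq Gw h(3,6) by (simp add: Tm_def smul3_def field_simps)
    then have "w = smul3 (B w / B w') w'" by (rule T_inj[OF D0])
    moreover have "B w / B w' \<noteq> 0" using h by simp
    ultimately show "proj_point w = proj_point w'" using proj_point_eq_iff[OF h(4)] by metis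
  next
    assume "proj_point w = proj_point w'"
    then obtain d where "d \<noteq> 0" "w' = smul3 d w" using proj_point_eq_iff[OF h(1)] by blast
    then show "- A w / B w = - A w' / B w'" by (simp add: dot_smul)
  qed
  show ?thesis unfolding model_props_def
    using tp_inj Bnz tpnz P3 P4 by auto
qed

lemma model_tan:
  assumes c: "cross g e = smul3 c a" "c \<noteq> 0"
  shows "model_props q a tp (\<lambda>w. A w / (\<rho> * G w)) (\<lambda>w. G w \<noteq> 0) False"
proof -
  have Bl: "B x = c * dot3 a x" for x using c by (simp add: dot_smul_left)
  have Bnz: "B u \<noteq> 0" if "dot3 a u \<noteq> 0" for u using Bl[of u] c(2) that by simp
  have P3: "pcollinear (proj_point u) (proj_point v) (proj_point w) \<longleftrightarrow>
         G w \<noteq> 0 \<and> tp u + tp v = A w / (\<rho> * G w)"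
    if h: "u \<noteq> (0,0,0)" "qeval q u = 0" "dot3 a u \<noteq> 0" "v \<noteq> (0,0,0)" "qeval q v = 0" "dot3 a v \<noteq> 0"
      "proj_point u \<noteq> proj_point v" "w \<noteq> (0,0,0)" "dot3 a w = 0" for u v w
  proof -
    have Bw: "B w = 0" using Bl[of w] h(9) by simp
    have "pcollinear (proj_point u) (proj_point v) (proj_point w) \<longleftrightarrow> A w - \<rho> * (tp u + tp v) * G w = 0"
      using coll[OF h(1,4,2,5) Bnz[OF h(3)] Bnz[OF h(6)] h(7,8)] Bw by simp
    also have "\<dots> \<longleftrightarrow> G w \<noteq> 0 \<and> tp u + tp v = A w / (\<rho> * G w)"
    proof (cases "G w = 0")
      case True
      have "A w \<noteq> 0" using T_nz[OF D0 h(8)] True Bw by (simp add: Tm_def)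
      then show ?thesis using True by simp
    next
      case False
      then show ?thesis using rho0 by (simp add: field_simps) (auto simp: algebra_simps)
    qed
    finally show ?thesis .
  qed
  have P4: "(A w / (\<rho> * G w) = A w' / (\<rho> * G w')) \<longleftrightarrow> proj_point w = proj_point w'"
    if h: "w \<noteq> (0,0,0)" "dot3 a w = 0" "G w \<noteq> 0" "w' \<noteq> (0,0,0)" "dot3 a w' = 0" "G w' \<noteq> 0" for w w'
  proof
    assume eq: "A w / (\<rho> * G w) = A w' / (\<rho> * G w')"
    have Bw: "B w = 0" "B w' = 0" using Bl h by auto
    have "Tm e f g w = smul3 (G w / G w') (Tm e f g w')"
      using eq Bw h(3,6) rho0 by (simp add: Tm_def smul3_def field_simps)
    then have "w = smul3 (G w / G w') w'" by (rule T_inj[OF D0])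
    moreover have "G w / G w' \<noteq> 0" using h by simp
    ultimately show "proj_point w = proj_point w'" using proj_point_eq_iff[OF h(4)] by metis
  next
    assume "proj_point w = proj_point w'"
    then obtain d where "d \<noteq> 0" "w' = smul3 d w" using proj_point_eq_iff[OF h(1)] by blast
    then show "A w / (\<rho> * G w) = A w' / (\<rho> * G w')" by (simp add: dot_smul)
  qed
  have Bnz': "B u \<noteq> 0" if "qeval q u = 0" "dot3 a u \<noteq> 0" for u using Bnz that(2) .
  show ?thesis unfolding model_props_def
    using tp_inj Bnz' P3 P4 by auto
qed

end

lemma model:
  fixes q :: "'k::alg_closed_field qform"
  assumes irr: "irreducible_qform q" and a0: "a \<noteq> (0,0,0)" and two: "(2::'k) \<noteq> 0"
  shows "\<exists>tp vp nd sec. model_props q a tp vp nd sec"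
proof -
  obtain e f g c where nbs: "nbasis q e f g" "c \<noteq> 0" "cross e f = smul3 c a \<or> cross g e = smul3 c a"
    using normal_basis[OF irr a0 two] by blast
  have h0: "pol q e f \<noteq> 0" using nbs by (simp add: nbasis_def)
  obtain \<rho> where r: "\<rho>^2 = - qeval q g / pol q e f" using alg_sqrt by blast
  have "\<rho>^2 * pol q e f = - qeval q g" using r h0 by simp
  then interpret nsetup q e f g \<rho> using nbs two by unfold_locales auto
  show ?thesis using nbs(3) model_sec[OF _ nbs(2)] model_tan[OF _ nbs(2)] by blast
qed

lemma card_mult_image:
  fixes s :: "'k::field"
  assumes "s \<noteq> 0" "finite Z"
  shows "card ((\<lambda>t. s*t) ` Z) = card Z"
  using assms by (intro card_image) (auto simp: inj_on_def)

lemma mult_structure: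
  fixes YY ZZ XX :: "'k::field set"
  assumes fY: "finite YY" and fZ: "finite ZZ" and fX: "finite XX"
    and cY: "card YY = n" and cZ: "card ZZ = n" and cX: "card XX = n" and n0: "n > 0"
    and nY: "0 \<notin> YY" and nZ: "0 \<notin> ZZ" and prod: "\<And>s t. s\<in>YY \<Longrightarrow> t\<in>ZZ \<Longrightarrow> s*t \<in> XX"
  shows "\<exists>g y0 z0. g^n = 1 \<and> inj_on (\<lambda>i. g^i) {0..<n} \<and> y0 \<noteq> 0 \<and> z0 \<noteq> 0 \<and>
     YY = (\<lambda>i. y0*g^i) ` {0..<n} \<and> ZZ = (\<lambda>i. z0*g^i) ` {0..<n} \<and> XX = (\<lambda>i. y0*z0*g^i) ` {0..<n}"
proof -
  obtain y0 where y0: "y0 \<in> YY" using cY n0 by (metis card.empty ex_in_conv less_irrefl)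
  obtain z0 where z0: "z0 \<in> ZZ" using cZ n0 by (metis card.empty ex_in_conv less_irrefl)
  have y00: "y0 \<noteq> 0" using y0 nY by auto
  have z00: "z0 \<noteq> 0" using z0 nZ by auto
  have sZ: "(\<lambda>t. s*t) ` ZZ = XX" if s: "s \<in> YY" for s
  proof -
    have "s \<noteq> 0" using s nY by auto
    then have "card ((\<lambda>t. s*t) ` ZZ) = n" using card_mult_image fZ cZ by metis
    moreover have "(\<lambda>t. s*t) ` ZZ \<subseteq> XX" using prod s by auto
    ultimately show ?thesis using fX cX by (metis card_subset_eq)
  qed
  define S where "S = {x. x \<noteq> 0 \<and> (\<lambda>t. x*t) ` ZZ = ZZ}"
  have S_mult: "x*y \<in> S" if "x \<in> S" "y \<in> S" for x y
  proof -
    have "(\<lambda>t. (x*y)*t) ` ZZ = (\<lambda>t. x*t) ` ((\<lambda>t. y*t) ` ZZ)" by (auto simp: image_image mult.assoc)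
    then show ?thesis using that by (simp add: S_def)
  qed
  have S1: "1 \<in> S" by (simp add: S_def)
  have S0: "0 \<notin> S" by (simp add: S_def)
  have Ssub: "S \<subseteq> (\<lambda>t. t / z0) ` ZZ"
  proof
    fix x assume x: "x \<in> S"
    then have "x * z0 \<in> ZZ" using z0 by (auto simp: S_def)
    moreover have "x = (x*z0)/z0" using z00 by simp
    ultimately show "x \<in> (\<lambda>t. t / z0) ` ZZ" by blast
  qed
  have fS: "finite S" using Ssub fZ finite_subset by blast
  have cSle: "card S \<le> n" using card_image_le[OF fZ, of "\<lambda>t. t/z0"] card_mono[OF _ Ssub] fZ cZ by simp
  have YS: "(\<lambda>s. s / y0) ` YY \<subseteq> S"
  proof
    fix x assume "x \<in> (\<lambda>s. s / y0) ` YY"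
    then obtain s where s: "s \<in> YY" "x = s / y0" by auto
    have "(\<lambda>t. x*t) ` ZZ = (\<lambda>t. t / y0) ` ((\<lambda>t. s*t) ` ZZ)" using s by (auto simp: image_image)
    also have "\<dots> = (\<lambda>t. t / y0) ` ((\<lambda>t. y0*t) ` ZZ)" using sZ[OF s(1)] sZ[OF y0] by simp
    also have "\<dots> = ZZ" using y00 by (auto simp: image_image)
    finally show "x \<in> S" using s nY y00 by (auto simp: S_def)
  qed
  have cYS: "card ((\<lambda>s. s / y0) ` YY) = n" using y00 cY fY by (subst card_image) (auto simp: inj_on_def)
  have Seq: "S = (\<lambda>s. s / y0) ` YY" using YS cYS cSle fS by (metis card_seteq order_refl)
  have cS: "card S = n" using Seq cYS by simp
  obtain g where g: "S = (\<lambda>i. g^i) ` {0..<n}" "inj_on (\<lambda>i. g^i) {0..<n}" "g^n = 1"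
    using finite_mult_subgroup_cyclic[OF fS S1 S0 S_mult] cS by auto
  have YYe: "YY = (\<lambda>x. y0 * x) ` S" using Seq y00 by (auto simp: image_image)
  have ZZe: "ZZ = (\<lambda>x. z0 * x) ` S"
  proof -
    have "(\<lambda>x. z0 * x) ` S \<subseteq> ZZ" using z0 by (auto simp: S_def mult.commute)
    moreover have "card ((\<lambda>x. z0 * x) ` S) = n" using card_mult_image[OF z00 fS] cS by simp
    ultimately show ?thesis using fZ cZ by (metis card_subset_eq)
  qed
  have XXe: "XX = (\<lambda>x. y0 * x) ` ZZ" using sZ[OF y0] by simp
  show ?thesis
    apply (rule exI[of _ g], rule exI[of _ y0], rule exI[of _ z0])
    using g y00 z00 YYe ZZe XXe by (auto simp: image_image mult.assoc)
qed

lemma add_contra: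
  fixes YY ZZ XX :: "'k::field set"
  assumes fZ: "finite ZZ" and fX: "finite XX"
    and cY: "card YY = n" and cZ: "card ZZ = n" and cX: "card XX = n" and n2: "n \<ge> 2"
    and sm: "\<And>s t. s\<in>YY \<Longrightarrow> t\<in>ZZ \<Longrightarrow> s+t \<in> XX"
    and ch: "\<And>j. 0 < j \<Longrightarrow> j \<le> n \<Longrightarrow> of_nat j \<noteq> (0::'k)"
  shows False
proof -
  have "finite YY" using cY n2 card.infinite by fastforce
  then obtain y0 y1 where y: "y0 \<in> YY" "y1 \<in> YY" "y0 \<noteq> y1" using cY n2
    by (metis One_nat_def card_le_Suc0_iff_eq not_less_eq_eq numeral_2_eq_2)
  obtain z0 where z0: "z0 \<in> ZZ" using cZ n2 by (metis card.empty ex_in_conv not_numeral_le_zero)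
  have sZ: "(\<lambda>t. s+t) ` ZZ = XX" if s: "s \<in> YY" for s
  proof -
    have "card ((\<lambda>t. s+t) ` ZZ) = n" using cZ by (subst card_image) (auto simp: inj_on_def)
    moreover have "(\<lambda>t. s+t) ` ZZ \<subseteq> XX" using sm s by auto
    ultimately show ?thesis using fX cX by (metis card_subset_eq)
  qed
  define d where "d = y1 - y0"
  have d0: "d \<noteq> 0" using y by (simp add: d_def)
  have shift: "t + d \<in> ZZ" if "t \<in> ZZ" for t
  proof -
    have "y1 + t \<in> XX" using sm y(2) that by simp
    then have "y1 + t \<in> (\<lambda>t. y0+t) ` ZZ" using sZ[OF y(1)] by simp
    then obtain t' where "t' \<in> ZZ" "y1 + t = y0 + t'" by auto
    then show ?thesis by (simp add: d_def algebra_simps)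
  qed
  have mem: "z0 + of_nat j * d \<in> ZZ" for j
  proof (induction j)
    case 0 then show ?case using z0 by simp
  next
    case (Suc j)
    then have "z0 + of_nat j * d + d \<in> ZZ" by (rule shift)
    then show ?case by (simp add: algebra_simps)
  qed
  have inj: "inj_on (\<lambda>j. z0 + of_nat j * d) {0..n}"
  proof (rule inj_onI)
    fix i j assume ij: "i \<in> {0..n}" "j \<in> {0..n}" "z0 + of_nat i * d = z0 + of_nat j * (d::'k)"
    show "i = j"
    proof (rule ccontr)
      assume "i \<noteq> j"
      then consider "i < j" | "j < i" by linarith
      then show False
      proof cases
        case 1
        have "of_nat i * d = of_nat j * d" using ij(3) by simp
        then have "(of_nat j - of_nat i) * d = 0" by (metis right_minus_eq left_diff_distrib)
        then have "of_nat (j - i) * d = 0" using 1 by (simp add: of_nat_diff)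
        moreover have "of_nat (j-i) \<noteq> (0::'k)" using ch[of "j-i"] 1 ij(2) by auto
        ultimately show False using d0 by simp
      next
        case 2
        have "of_nat i * d = of_nat j * d" using ij(3) by simp
        then have "(of_nat i - of_nat j) * d = 0" by (metis right_minus_eq left_diff_distrib)
        then have "of_nat (i - j) * d = 0" using 2 by (simp add: of_nat_diff)
        moreover have "of_nat (i-j) \<noteq> (0::'k)" using ch[of "i-j"] 2 ij(1) by auto
        ultimately show False using d0 by simp
      qed
    qed
  qed
  have "(\<lambda>j. z0 + of_nat j * d) ` {0..n} \<subseteq> ZZ" using mem by auto
  then have "card ((\<lambda>j. z0 + of_nat j * d) ` {0..n}) \<le> n" using card_mono[OF fZ] cZ by metis
  then show False using card_image[OF inj] by simp
qed

lemma modlem: fixes a b c n :: nat assumes "c < n" shows "(a + b + (n - c) mod n) mod n = 0 \<longleftrightarrow> (a + b) mod n = c"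
proof -
  define r where "r = (a+b) mod n"
  have "(a + b + (n - c) mod n) mod n = (r + (n - c)) mod n" unfolding r_def by (metis mod_add_eq mod_mod_trivial)
  moreover have r: "r < n" using assms unfolding r_def by simp
  moreover have "(r + (n - c)) mod n = 0 \<longleftrightarrow> r = c"
  proof (cases "c \<le> r")
    case True
    then have "r + (n - c) = (r - c) + n" using assms by simp
    then have "(r + (n - c)) mod n = (r - c + n) mod n" by metis
    also have "\<dots> = r - c" using r by simp
    finally have "(r + (n - c)) mod n = r - c" .
    then show ?thesis using True by simp
  next
    case False
    then have "(r + (n - c)) mod n = r + (n - c)" using assms by simp
    then show ?thesis using False assms by simp
  qed
  ultimately show ?thesis unfolding r_def by simp
qed

lemma modlem2: fixes i j k n :: nat assumes "i < n"
  shows "(j + k) mod n = (n - i) mod n \<longleftrightarrow> (i + j + k) mod n = 0"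
proof -
  have "(i + j + k) mod n = (j + k + (n - (n - i) mod n) mod n) mod n"
  proof (cases "i = 0")
    case True then show ?thesis by simp
  next
    case False
    then have "(n - i) mod n = n - i" using assms by simp
    then have "(n - (n - i) mod n) mod n = i" using assms by simp
    then show ?thesis by (metis add.commute mod_add_eq mod_mod_trivial add.assoc)
  qed
  also have "\<dots> = 0 \<longleftrightarrow> (j + k) mod n = (n - i) mod n"
    by (rule modlem) (use assms in simp)
  finally show ?thesis by simp
qed

definition rep :: "'k::field vec3 set \<Rightarrow> 'k vec3" where
  "rep P = (SOME v. v \<noteq> (0,0,0) \<and> P = proj_point v)"

lemma rep: "P \<in> PG2 \<Longrightarrow> rep P \<noteq> (0,0,0) \<and> P = proj_point (rep P)"
  unfolding rep_def by (rule someI_ex) (auto simp: PG2_def)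

lemma line_through:
  assumes "P \<in> PG2" "Q \<in> PG2" "P \<noteq> Q"
  shows "\<exists>l\<in>plines. P \<in> l \<and> Q \<in> l"
proof -
  have u: "rep P \<noteq> (0,0,0)" "P = proj_point (rep P)" using rep[OF assms(1)] by auto
  have v: "rep Q \<noteq> (0,0,0)" "Q = proj_point (rep Q)" using rep[OF assms(2)] by auto
  have c: "cross (rep P) (rep Q) \<noteq> (0,0,0)" using proj_point_eq_cross[OF u(1) v(1)] u(2) v(2) assms(3) by auto
  have "dot3 (cross (rep P) (rep Q)) (rep P) = 0" "dot3 (cross (rep P) (rep Q)) (rep Q) = 0"
    using cross_dot1 cross_dot2 dot_comm by metis+
  then have "P \<in> pline (cross (rep P) (rep Q))" "Q \<in> pline (cross (rep P) (rep Q))"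
    using in_pline_iff[OF u(1)] in_pline_iff[OF v(1)] u(2) v(2) by auto
  then show ?thesis using c unfolding plines_def by blast
qed

definition sym3 :: "'k::field vec3 set set \<Rightarrow> 'k vec3 set set \<Rightarrow> 'k vec3 set set \<Rightarrow> nat \<Rightarrow> bool" where
  "sym3 A B C n \<longleftrightarrow> (\<exists>h1 h2 h3. bij_betw h1 {0..<n} A \<and> bij_betw h2 {0..<n} B \<and> bij_betw h3 {0..<n} C \<and>
     (\<forall>i<n. \<forall>j<n. \<forall>k<n. pcollinear (h1 i) (h2 j) (h3 k) \<longleftrightarrow> (i+j+k) mod n = 0))"

lemma pcoll_iff_perm:
  "pcollinear P Q R \<longleftrightarrow> pcollinear Q P R" "pcollinear P Q R \<longleftrightarrow> pcollinear P R Q"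
  using pcollinear_perm by blast+

lemma sym3_swap12: "sym3 A B C n \<Longrightarrow> sym3 B A C n"
  unfolding sym3_def
  by (metis (no_types, lifting) add.commute pcoll_iff_perm(1))

lemma sym3_swap23: "sym3 A B C n \<Longrightarrow> sym3 A C B n"
  unfolding sym3_def
  by (smt (verit, ccfv_SIG) add.assoc add.commute pcoll_iff_perm(2))

lemma pow_mod_eq:
  fixes g :: "'k::field"
  assumes "g^n = 1"
  shows "g^a = g^(a mod n)"
proof -
  have e: "g^(n * (a div n) + a mod n) = (g^n)^(a div n) * g^(a mod n)" by (simp only: power_add power_mult)
  have "n * (a div n) + a mod n = a" by simp
  then show ?thesis using e assms by simp
qed

lemma pow_eq_iff:
  fixes g :: "'k::field"
  assumes "g^n = 1" "inj_on (\<lambda>i. g^i) {0..<n}" "n > 0"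
  shows "g^a = g^b \<longleftrightarrow> a mod n = b mod n"
proof -
  have "g^a = g^b \<longleftrightarrow> g^(a mod n) = g^(b mod n)" using pow_mod_eq[OF assms(1)] by metis
  also have "\<dots> \<longleftrightarrow> a mod n = b mod n" using assms(2,3) unfolding inj_on_def by auto
  finally show ?thesis .
qed

lemma core:
  fixes q :: "'k::alg_closed_field qform" and a :: "'k vec3" and X Y Z :: "'k vec3 set set"
  assumes irr: "irreducible_qform q" and two: "(2::'k) \<noteq> 0" and a0: "a \<noteq> (0,0,0)"
    and ch: "\<And>j. 0 < j \<Longrightarrow> j \<le> n \<Longrightarrow> of_nat j \<noteq> (0::'k)" and n2: "n \<ge> 2"
    and XL: "X \<subseteq> pline a" and YC: "Y \<subseteq> conic_pts q" and ZC: "Z \<subseteq> conic_pts q"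
    and PX: "X \<subseteq> PG2" and PY: "Y \<subseteq> PG2" and PZ: "Z \<subseteq> PG2"
    and fX: "finite X" and fY: "finite Y" and fZ: "finite Z"
    and cX: "card X = n" and cY: "card Y = n" and cZ: "card Z = n"
    and YZ: "Y \<inter> Z = {}"
    and net1: "\<And>l. l \<in> plines \<Longrightarrow> l \<inter> Y \<noteq> {} \<Longrightarrow> l \<inter> Z \<noteq> {} \<Longrightarrow> card (l \<inter> X) = 1"
    and net2: "\<And>l. l \<in> plines \<Longrightarrow> l \<inter> Y \<noteq> {} \<Longrightarrow> l \<inter> X \<noteq> {} \<Longrightarrow> card (l \<inter> Z) = 1"
    and net3: "\<And>l. l \<in> plines \<Longrightarrow> l \<inter> Y \<noteq> {} \<Longrightarrow> l \<inter> X \<noteq> {} \<Longrightarrow> card (l \<inter> X) = 1"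
    and net4: "\<And>l. l \<in> plines \<Longrightarrow> l \<inter> Z \<noteq> {} \<Longrightarrow> l \<inter> X \<noteq> {} \<Longrightarrow> card (l \<inter> X) = 1"
  shows "sym3 Y Z X n"
proof -
  obtain tp vp nd sec where M: "model_props q a tp vp nd sec" using model[OF irr a0 two] by blast
  note M1 = M[unfolded model_props_def, THEN conjunct1, rule_format]
  note M2 = M[unfolded model_props_def, THEN conjunct2, THEN conjunct1, rule_format]
  note M3 = M[unfolded model_props_def, THEN conjunct2, THEN conjunct2, THEN conjunct1, rule_format]
  note M4 = M[unfolded model_props_def, THEN conjunct2, THEN conjunct2, THEN conjunct2, rule_format]
  have lA: "pline a \<in> plines" unfolding plines_def using a0 by blast
  have Xne: "X \<noteq> {}" using cX n2 by auto
  have Yne: "Y \<noteq> {}" using cY n2 by auto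
  have XeqL: "pline a \<inter> X = X" using XL by auto
  have repX: "rep x \<noteq> (0,0,0) \<and> x = proj_point (rep x)" if "x \<in> X" for x using rep PX that by blast
  have repY: "rep y \<noteq> (0,0,0) \<and> y = proj_point (rep y)" if "y \<in> Y" for y using rep PY that by blast
  have repZ: "rep z \<noteq> (0,0,0) \<and> z = proj_point (rep z)" if "z \<in> Z" for z using rep PZ that by blast
  have offl: "dot3 a (rep y) \<noteq> 0" if "y \<in> Y \<union> Z" for y
  proof
    assume d: "dot3 a (rep y) = 0"
    have r: "rep y \<noteq> (0,0,0)" "y = proj_point (rep y)" using that repY repZ by blast+
    have "y \<in> pline a" using in_pline_iff[OF r(1)] d r(2) by simp
    then have "card (pline a \<inter> X) = 1" using that net3[OF lA] net4[OF lA] Xne XeqL by blast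
    then show False using XeqL cX n2 by simp
  qed
  have onl: "dot3 a (rep x) = 0" if "x \<in> X" for x
  proof -
    have r: "rep x \<noteq> (0,0,0)" "x = proj_point (rep x)" using repX[OF that] by blast+
    have "x \<in> pline a" using XL that by blast
    then show ?thesis using in_pline_iff[OF r(1), of a] r(2) by simp
  qed
  have onC: "qeval q (rep y) = 0" if "y \<in> Y \<union> Z" for y
  proof -
    have r: "rep y \<noteq> (0,0,0)" "y = proj_point (rep y)" using that repY repZ by blast+
    have "y \<in> conic_pts q" using that YC ZC by blast
    then show ?thesis using in_conic_iff[OF r(1)] r(2) by simp
  qed
  have XY: "x \<noteq> y" if "x \<in> X" "y \<in> Y" for x y
    using offl[of y] onl[of x] that by auto
  have N1: "\<exists>x\<in>X. pcollinear y z x" if h: "y \<in> Y" "z \<in> Z" for y z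
  proof -
    have "y \<noteq> z" using YZ h by auto
    then obtain l where l: "l \<in> plines" "y \<in> l" "z \<in> l" using line_through PY PZ h by blast
    then have "card (l \<inter> X) = 1" using net1 h by blast
    then obtain x where "x \<in> l \<inter> X" by (metis card_1_singletonE insertI1)
    then show ?thesis using l unfolding pcollinear_def by blast
  qed
  have N2: "\<exists>z\<in>Z. pcollinear y z x" if h: "x \<in> X" "y \<in> Y" for x y
  proof -
    have "y \<noteq> x" using XY h by auto
    then obtain l where l: "l \<in> plines" "y \<in> l" "x \<in> l" using line_through PY PX h by blast
    then have "card (l \<inter> Z) = 1" using net2 h by blast
    then obtain z where "z \<in> l \<inter> Z" by (metis card_1_singletonE insertI1)
    then show ?thesis using l unfolding pcollinear_def by blast
  qed
  define op where "op = (\<lambda>s t::'k. if sec then s * t else s + t)"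
  have coll: "pcollinear y z x \<longleftrightarrow> nd (rep x) \<and> op (tp (rep y)) (tp (rep z)) = vp (rep x)"
    if h: "y \<in> Y" "z \<in> Z" "x \<in> X" for x y z
  proof -
    have yz: "y \<noteq> z" using YZ h by auto
    have ry: "rep y \<noteq> (0,0,0)" "y = proj_point (rep y)" using repY h by blast+
    have rz: "rep z \<noteq> (0,0,0)" "z = proj_point (rep z)" using repZ h by blast+
    have rx: "rep x \<noteq> (0,0,0)" "x = proj_point (rep x)" using repX h by blast+
    have "pcollinear (proj_point (rep y)) (proj_point (rep z)) (proj_point (rep x)) \<longleftrightarrow>
       nd (rep x) \<and> op (tp (rep y)) (tp (rep z)) = vp (rep x)"
      unfolding op_def
      using M3[of "rep y" "rep z" "rep x"] ry rz rx yz onC[of y] onC[of z] offl[of y] offl[of z] onl[of x] h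
      by auto
    then show ?thesis using ry rz rx by simp
  qed
  have ndx: "nd (rep x)" if hx: "x \<in> X" for x
  proof -
    obtain y where y: "y \<in> Y" using Yne by blast
    obtain z where "z \<in> Z" "pcollinear y z x" using N2 hx y by blast
    then show ?thesis using coll y hx by blast
  qed
  have collE: "pcollinear y z x \<longleftrightarrow> op (tp (rep y)) (tp (rep z)) = vp (rep x)"
    if "y \<in> Y" "z \<in> Z" "x \<in> X" for x y z using coll[OF that] ndx[OF that(3)] by blast
  define fy where "fy = (\<lambda>y. tp (rep y))"
  define fx where "fx = (\<lambda>x. vp (rep x))"
  have injY: "inj_on fy Y"
  proof (rule inj_onI)
    fix y y' assume h: "y \<in> Y" "y' \<in> Y" "fy y = fy y'"
    have r: "rep y \<noteq> (0,0,0)" "y = proj_point (rep y)" "rep y' \<noteq> (0,0,0)" "y' = proj_point (rep y')"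
      using repY h by blast+
    show "y = y'" using M1[of "rep y" "rep y'"] r onC offl h unfolding fy_def by auto
  qed
  have injZ: "inj_on fy Z"
  proof (rule inj_onI)
    fix y y' assume h: "y \<in> Z" "y' \<in> Z" "fy y = fy y'"
    have r: "rep y \<noteq> (0,0,0)" "y = proj_point (rep y)" "rep y' \<noteq> (0,0,0)" "y' = proj_point (rep y')"
      using repZ h by blast+
    show "y = y'" using M1[of "rep y" "rep y'"] r onC offl h unfolding fy_def by auto
  qed
  have injX: "inj_on fx X"
  proof (rule inj_onI)
    fix x x' assume h: "x \<in> X" "x' \<in> X" "fx x = fx x'"
    have r: "rep x \<noteq> (0,0,0)" "x = proj_point (rep x)" "rep x' \<noteq> (0,0,0)" "x' = proj_point (rep x')"
      using repX h by blast+
    show "x = x'" using M4[of "rep x" "rep x'"] r onl ndx h unfolding fx_def by auto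
  qed
  have cYY: "card (fy ` Y) = n" using card_image[OF injY] cY by simp
  have cZZ: "card (fy ` Z) = n" using card_image[OF injZ] cZ by simp
  have cXX: "card (fx ` X) = n" using card_image[OF injX] cX by simp
  have opXX: "op s t \<in> fx ` X" if hst: "s \<in> fy ` Y" "t \<in> fy ` Z" for s t
  proof -
    obtain y z where yz: "y \<in> Y" "z \<in> Z" "s = fy y" "t = fy z" using hst by blast
    obtain x where "x \<in> X" "pcollinear y z x" using N1 yz by blast
    then show ?thesis using collE[OF yz(1,2)] yz unfolding fy_def fx_def by force
  qed
  show ?thesis
  proof (cases sec)
    case False
    have "op = (+)" using False by (simp add: op_def fun_eq_iff)
    then have False using add_contra[OF finite_imageI[OF fZ] finite_imageI[OF fX] cYY cZZ cXX n2 _ ch] opXX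
      by blast
    then show ?thesis ..
  next
    case True
    have opm: "op = (*)" using True by (simp add: op_def fun_eq_iff)
    have nzY: "0 \<notin> fy ` Y"
    proof
      assume "0 \<in> fy ` Y"
      then obtain y where y: "y \<in> Y" "fy y = 0" by auto
      have "tp (rep y) \<noteq> 0" using M2[OF True, of "rep y"] repY[OF y(1)] onC[of y] offl[of y] y(1) by blast
      then show False using y(2) unfolding fy_def by simp
    qed
    have nzZ: "0 \<notin> fy ` Z"
    proof
      assume "0 \<in> fy ` Z"
      then obtain y where y: "y \<in> Z" "fy y = 0" by auto
      have "tp (rep y) \<noteq> 0" using M2[OF True, of "rep y"] repZ[OF y(1)] onC[of y] offl[of y] y(1) by blast
      then show False using y(2) unfolding fy_def by simp
    qed
    obtain g y0 z0 where G: "g^n = 1" "inj_on (\<lambda>i. g^i) {0..<n}" "y0 \<noteq> 0" "z0 \<noteq> 0"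
      "fy ` Y = (\<lambda>i. y0*g^i) ` {0..<n}" "fy ` Z = (\<lambda>i. z0*g^i) ` {0..<n}"
      "fx ` X = (\<lambda>i. y0*z0*g^i) ` {0..<n}"
      using mult_structure[OF finite_imageI[OF fY] finite_imageI[OF fZ] finite_imageI[OF fX] cYY cZZ cXX _ nzY nzZ]
        opXX opm n2 by auto
    have n0: "n > 0" using n2 by simp
    define pm where "pm = (\<lambda>i::nat. (n - i) mod n)"
    have pm_inv: "pm (pm i) = i" if "i < n" for i
      using that by (cases "i = 0") (auto simp: pm_def)
    have pm_bij: "bij_betw pm {0..<n} {0..<n}"
    proof (rule bij_betw_imageI)
      show "inj_on pm {0..<n}" using pm_inv by (metis atLeastLessThan_iff inj_on_inverseI)
      show "pm ` {0..<n} = {0..<n}"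
      proof
        show "pm ` {0..<n} \<subseteq> {0..<n}" using n0 by (auto simp: pm_def)
        show "{0..<n} \<subseteq> pm ` {0..<n}"
        proof
          fix i assume "i \<in> {0..<n}"
          then have "pm (pm i) = i" "pm i \<in> {0..<n}" using pm_inv n0 by (auto simp: pm_def)
          then show "i \<in> pm ` {0..<n}" by (metis imageI)
        qed
      qed
    qed
    have injc: "inj_on (\<lambda>i. c * g^i) {0..<n}" if "c \<noteq> 0" for c
      using G(2) that unfolding inj_on_def by auto
    have bY: "bij_betw fy Y (fy ` Y)" using injY by (simp add: bij_betw_imageI)
    have bZ: "bij_betw fy Z (fy ` Z)" using injZ by (simp add: bij_betw_imageI)
    have bX: "bij_betw fx X (fx ` X)" using injX by (simp add: bij_betw_imageI)
    define h1 where "h1 = inv_into Y fy \<circ> (\<lambda>i. y0*g^i)"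
    define h2 where "h2 = inv_into Z fy \<circ> (\<lambda>i. z0*g^i)"
    define h3 where "h3 = inv_into X fx \<circ> (\<lambda>i. y0*z0*g^i) \<circ> pm"
    have b1: "bij_betw h1 {0..<n} Y" unfolding h1_def
      by (rule bij_betw_trans[OF _ bij_betw_inv_into[OF bY]]) (use G(3,5) injc in \<open>simp add: bij_betw_def\<close>)
    have b2: "bij_betw h2 {0..<n} Z" unfolding h2_def
      by (rule bij_betw_trans[OF _ bij_betw_inv_into[OF bZ]]) (use G(4,6) injc in \<open>simp add: bij_betw_def\<close>)
    have yz0: "y0 * z0 \<noteq> 0" using G(3,4) by simp
    have b3': "bij_betw (inv_into X fx \<circ> (\<lambda>i. y0*z0*g^i)) {0..<n} X"
      by (rule bij_betw_trans[OF _ bij_betw_inv_into[OF bX]]) (use G(7) injc[OF yz0] in \<open>simp add: bij_betw_def\<close>)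
    have b3: "bij_betw h3 {0..<n} X" unfolding h3_def by (rule bij_betw_trans[OF pm_bij b3'])
    have v1: "fy (h1 j) = y0 * g^j" if "j < n" for j
    proof -
      have "y0 * g^j \<in> fy ` Y" using G(5) that by force
      then show ?thesis unfolding h1_def by (simp add: f_inv_into_f)
    qed
    have v2: "fy (h2 j) = z0 * g^j" if "j < n" for j
    proof -
      have "z0 * g^j \<in> fy ` Z" using G(6) that by force
      then show ?thesis unfolding h2_def by (simp add: f_inv_into_f)
    qed
    have v3: "fx (h3 i) = y0 * z0 * g^(pm i)" if "i < n" for i
    proof -
      have "pm i < n" using n0 by (simp add: pm_def)
      then have "y0 * z0 * g^(pm i) \<in> fx ` X" using G(7) by force
      then show ?thesis unfolding h3_def by (simp add: f_inv_into_f)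
    qed
    have "pcollinear (h1 j) (h2 k) (h3 i) \<longleftrightarrow> (i + j + k) mod n = 0"
      if ijk: "i < n" "j < n" "k < n" for i j k
    proof -
      have m: "h1 j \<in> Y" "h2 k \<in> Z" "h3 i \<in> X"
        using b1 b2 b3 ijk by (auto simp: bij_betw_def)
      have "pcollinear (h1 j) (h2 k) (h3 i) \<longleftrightarrow> fy (h1 j) * fy (h2 k) = fx (h3 i)"
        using collE[OF m] opm unfolding fy_def fx_def by simp
      also have "\<dots> \<longleftrightarrow> y0 * z0 * g^(j+k) = y0 * z0 * g^(pm i)"
        using v1 v2 v3 ijk by (simp add: power_add algebra_simps)
      also have "\<dots> \<longleftrightarrow> g^(j+k) = g^(pm i)" using yz0 by simp
      also have "\<dots> \<longleftrightarrow> (j+k) mod n = pm i mod n" by (rule pow_eq_iff[OF G(1,2) n0])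
      also have "\<dots> \<longleftrightarrow> (j+k) mod n = (n - i) mod n" by (simp add: pm_def)
      also have "\<dots> \<longleftrightarrow> (i + j + k) mod n = 0" by (rule modlem2[OF ijk(1)])
      finally show ?thesis .
    qed
    then have "\<forall>i<n. \<forall>j<n. \<forall>k<n. pcollinear (h1 i) (h2 j) (h3 k) \<longleftrightarrow> (i+j+k) mod n = 0"
      by (metis add.commute add.left_commute)
    then show ?thesis unfolding sym3_def using b1 b2 b3 by blast
  qed
qed

lemma pm_bij: "bij_betw (\<lambda>i::nat. (n - i) mod n) {0..<n} {0..<n}"
proof -
  define pm where "pm = (\<lambda>i::nat. (n - i) mod n)"
  have pm_inv: "pm (pm i) = i" if "i < n" for i
    using that by (cases "i = 0") (auto simp: pm_def)
  have "bij_betw pm {0..<n} {0..<n}"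
  proof (rule bij_betw_imageI)
    show "inj_on pm {0..<n}" using pm_inv by (metis atLeastLessThan_iff inj_on_inverseI)
    show "pm ` {0..<n} = {0..<n}"
    proof
      show "pm ` {0..<n} \<subseteq> {0..<n}" by (auto simp: pm_def)
      show "{0..<n} \<subseteq> pm ` {0..<n}"
      proof
        fix i assume i: "i \<in> {0..<n}"
        then have "pm (pm i) = i" "pm i \<in> {0..<n}" using pm_inv by (auto simp: pm_def)
        then show "i \<in> pm ` {0..<n}" by (metis imageI)
      qed
    qed
  qed
  then show ?thesis by (simp add: pm_def)
qed

lemma realizes_of_sym3:
  assumes "sym3 L1 L2 L3 n"
  shows "realizes L1 L2 L3 (cyclic_carrier n) (cyclic_mult n)"
proof -
  obtain h1 h2 h3 where h: "bij_betw h1 {0..<n} L1" "bij_betw h2 {0..<n} L2" "bij_betw h3 {0..<n} L3"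
    "\<forall>i<n. \<forall>j<n. \<forall>k<n. pcollinear (h1 i) (h2 j) (h3 k) \<longleftrightarrow> (i+j+k) mod n = 0"
    using assms unfolding sym3_def by blast
  define \<gamma> where "\<gamma> = h3 \<circ> (\<lambda>i::nat. (n - i) mod n)"
  have bg: "bij_betw \<gamma> {0..<n} L3" unfolding \<gamma>_def by (rule bij_betw_trans[OF pm_bij h(3)])
  have "cyclic_mult n a b = c \<longleftrightarrow> pcollinear (h1 a) (h2 b) (\<gamma> c)"
    if "a < n" "b < n" "c < n" for a b c
  proof -
    have "(n - c) mod n < n" using that by simp
    then have "pcollinear (h1 a) (h2 b) (\<gamma> c) \<longleftrightarrow> (a + b + (n - c) mod n) mod n = 0"
      using h(4) that unfolding \<gamma>_def by simp
    also have "\<dots> \<longleftrightarrow> (a + b) mod n = c" by (rule modlem[OF that(3)])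
    finally show ?thesis by (simp add: cyclic_mult_def)
  qed
  then show ?thesis unfolding realizes_def cyclic_carrier_def using h(1,2) bg by auto
qed

lemma core_comp:
  fixes L1 L2 L3 :: "'k::alg_closed_field vec3 set set" and q :: "'k qform"
  assumes net: "dual_3net L1 L2 L3 n" and n2: "n \<ge> 2"
    and irr: "irreducible_qform q" and two: "(2::'k) \<noteq> 0" and a0: "a \<noteq> (0,0,0)"
    and ch: "\<And>j. 0 < j \<Longrightarrow> j \<le> n \<Longrightarrow> of_nat j \<noteq> (0::'k)"
    and idx: "x < 3" "y < 3" "z < 3" "x \<noteq> y" "x \<noteq> z" "y \<noteq> z"
    and XL: "comp3 L1 L2 L3 x \<subseteq> pline a" and YC: "comp3 L1 L2 L3 y \<subseteq> conic_pts q"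
    and ZC: "comp3 L1 L2 L3 z \<subseteq> conic_pts q"
  shows "sym3 (comp3 L1 L2 L3 y) (comp3 L1 L2 L3 z) (comp3 L1 L2 L3 x) n"
proof -
  let ?c = "comp3 L1 L2 L3"
  have N1: "\<forall>i<3. ?c i \<subseteq> PG2 \<and> finite (?c i) \<and> card (?c i) = n"
    and N2: "\<forall>i<3. \<forall>j<3. i \<noteq> j \<longrightarrow> ?c i \<inter> ?c j = {}"
    and N3: "\<forall>l\<in>plines. \<forall>i<3. \<forall>j<3. i \<noteq> j \<and> l \<inter> ?c i \<noteq> {} \<and> l \<inter> ?c j \<noteq> {}
        \<longrightarrow> (\<forall>k<3. card (l \<inter> ?c k) = 1)"
    using net unfolding dual_3net_def by blast+
  show ?thesis
  proof (rule core[OF irr two a0 ch n2 XL YC ZC])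
    show "?c x \<subseteq> PG2" "?c y \<subseteq> PG2" "?c z \<subseteq> PG2" "finite (?c x)" "finite (?c y)" "finite (?c z)"
      "card (?c x) = n" "card (?c y) = n" "card (?c z) = n" using N1 idx by blast+
    show "?c y \<inter> ?c z = {}" using N2 idx by blast
    show "\<And>l. l \<in> plines \<Longrightarrow> l \<inter> ?c y \<noteq> {} \<Longrightarrow> l \<inter> ?c z \<noteq> {} \<Longrightarrow> card (l \<inter> ?c x) = 1"
      using N3 idx by blast
    show "\<And>l. l \<in> plines \<Longrightarrow> l \<inter> ?c y \<noteq> {} \<Longrightarrow> l \<inter> ?c x \<noteq> {} \<Longrightarrow> card (l \<inter> ?c z) = 1"
      using N3 idx by metis
    show "\<And>l. l \<in> plines \<Longrightarrow> l \<inter> ?c y \<noteq> {} \<Longrightarrow> l \<inter> ?c x \<noteq> {} \<Longrightarrow> card (l \<inter> ?c x) = 1"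
      using N3 idx by metis
    show "\<And>l. l \<in> plines \<Longrightarrow> l \<inter> ?c z \<noteq> {} \<Longrightarrow> l \<inter> ?c x \<noteq> {} \<Longrightarrow> card (l \<inter> ?c x) = 1"
      using N3 idx by metis
  qed
qed

theorem proposition4p11:
  fixes L1 L2 L3 :: "'k::alg_closed_field vec3 set set" and n :: nat
  assumes "CHAR('k) = 0 \<or> CHAR('k) \<ge> 5"
    and "conic_line_type L1 L2 L3 n"
    and "CHAR('k) > 0 \<longrightarrow> n < CHAR('k)"
  shows "realizes L1 L2 L3 (cyclic_carrier n) (cyclic_mult n)"
proof -
  have net: "dual_3net L1 L2 L3 n" and n4: "n \<ge> 4" and
    ex: "\<exists>k<3. \<exists>C l. irreducible_conic C \<and> l \<in> plines \<and> comp3 L1 L2 L3 k \<subseteq> l \<and>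
        (\<forall>i<3. i \<noteq> k \<longrightarrow> comp3 L1 L2 L3 i \<subseteq> C)"
    using assms(2) unfolding conic_line_type_def by blast+
  obtain k C l where k: "k < 3" "irreducible_conic C" "l \<in> plines" "comp3 L1 L2 L3 k \<subseteq> l"
    "\<forall>i<3. i \<noteq> k \<longrightarrow> comp3 L1 L2 L3 i \<subseteq> C" using ex by blast
  obtain q where q: "irreducible_qform q" "C = conic_pts q" using k(2) unfolding irreducible_conic_def by blast
  obtain a where a: "a \<noteq> (0,0,0)" "l = pline a" using k(3) unfolding plines_def by blast
  have two: "(2::'k) \<noteq> 0"
  proof
    assume "(2::'k) = 0"
    then have "of_nat 2 = (0::'k)" by simp
    then have "CHAR('k) dvd 2" by (simp only: of_nat_eq_0_iff_char_dvd)
    then show False using assms(1) by (auto dest: dvd_imp_le)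
  qed
  have ch: "of_nat j \<noteq> (0::'k)" if "0 < j" "j \<le> n" for j
  proof
    assume "of_nat j = (0::'k)"
    then have d: "CHAR('k) dvd j" by (simp only: of_nat_eq_0_iff_char_dvd)
    show False
    proof (cases "CHAR('k) = 0")
      case True then show False using d that by simp
    next
      case False
      then have "n < CHAR('k)" using assms(3) by simp
      moreover have "CHAR('k) \<le> j" using d that by (simp add: dvd_imp_le)
      ultimately show False using that by simp
    qed
  qed
  have n2: "n \<ge> 2" using n4 by simp
  note cc = core_comp[OF net n2 q(1) two a(1) ch]
  have kC: "comp3 L1 L2 L3 i \<subseteq> conic_pts q" if "i < 3" "i \<noteq> k" for i using k(5) q(2) that by blast
  have kL: "comp3 L1 L2 L3 k \<subseteq> pline a" using k(4) a(2) by simp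
  have "k = 0 \<or> k = 1 \<or> k = 2" using k(1) by auto
  then have "sym3 L1 L2 L3 n"
  proof (elim disjE)
    assume k0: "k = 0"
    have "sym3 L2 L3 L1 n" using cc[of 0 1 2] kL kC[of 1] kC[of 2] k0 by (simp add: comp3_def)
    then show ?thesis by (meson sym3_swap12 sym3_swap23)
  next
    assume k1: "k = 1"
    have "sym3 L1 L3 L2 n" using cc[of 1 0 2] kL kC[of 0] kC[of 2] k1 by (simp add: comp3_def)
    then show ?thesis by (rule sym3_swap23)
  next
    assume k2: "k = 2"
    show "sym3 L1 L2 L3 n" using cc[of 2 0 1] kL kC[of 0] kC[of 1] k2 by (simp add: comp3_def)
  qed
  then show ?thesis by (rule realizes_of_sym3)
qed

end
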